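(* Let $f:(\mathbb{C}^3,0)\to(\mathbb{C}^3,0)$ be a degenerate spike $$f(x,y,z)=(x+z^c(\lambda x+P),\; y+z^c(\mu y+Q),\; z+z^{c+1}R),$$ with $c\in\mathbb{N}^*$, $\lambda\in\mathbb{C}^*$, $\mu\in\lambda\mathbb{R}_{<0}$, $P,Q\in\mathfrak{m}^2$, $R\in\mathfrak{m}$. Then there exists a unique formal $f$-invariant curve $C$ not contained in $E=\{z=0\}$. Moreover $C$ is smooth and transverse to $E$.
   Context: $\mathfrak{m}$ is the maximal ideal at $0$. A formal curve is an irreducible formal curve at $0$. It is $f$-invariant if $f$ maps it to itself. *)

theory Defs
  imports Complex_Main "HOL-Computational_Algebra.Formal_Power_Series"
begin

text \<open>Formal power series in three variables x, y, z over the complex numbers,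
  realised as C[[x]][[y]][[z]] (which is isomorphic to C[[x,y,z]]).
  The outer variable is z, the middle one y, the innermost one x.\<close>
type_synonym ser3 = "complex fps fps fps"

definition coeff3 :: "ser3 \<Rightarrow> nat \<Rightarrow> nat \<Rightarrow> nat \<Rightarrow> complex" where
  "coeff3 g i j k = fps_nth (fps_nth (fps_nth g k) j) i"

definition mk3 :: "(nat \<Rightarrow> nat \<Rightarrow> nat \<Rightarrow> complex) \<Rightarrow> ser3" where
  "mk3 h = Abs_fps (\<lambda>k. Abs_fps (\<lambda>j. Abs_fps (\<lambda>i. h i j k)))"

definition X3 :: ser3 where "X3 = fps_const (fps_const fps_X)"
definition Y3 :: ser3 where "Y3 = fps_const fps_X"
definition Z3 :: ser3 where "Z3 = fps_X"

definition in_max_pow :: "ser3 \<Rightarrow> nat \<Rightarrow> bool" where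
  "in_max_pow g d \<longleftrightarrow> (\<forall>i j k. i + j + k < d \<longrightarrow> coeff3 g i j k = 0)"

text \<open>Composition g o F for a formal map F = (F1,F2,F3) fixing 0.\<close>
definition comp3 :: "ser3 \<Rightarrow> ser3 \<times> ser3 \<times> ser3 \<Rightarrow> ser3" where
  "comp3 g F = (case F of (F1, F2, F3) \<Rightarrow>
     mk3 (\<lambda>p q r. \<Sum>i\<le>p+q+r. \<Sum>j\<le>p+q+r. \<Sum>k\<le>p+q+r.
        coeff3 g i j k * coeff3 (F1 ^ i * F2 ^ j * F3 ^ k) p q r))"

type_synonym arc = "complex fps \<times> complex fps \<times> complex fps"

definition is_arc :: "arc \<Rightarrow> bool" where
  "is_arc \<gamma> = (case \<gamma> of (a, b, c) \<Rightarrow>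
     fps_nth a 0 = 0 \<and> fps_nth b 0 = 0 \<and> fps_nth c 0 = 0 \<and> \<gamma> \<noteq> (0, 0, 0))"

definition subst3 :: "ser3 \<Rightarrow> arc \<Rightarrow> complex fps" where
  "subst3 g \<gamma> = (case \<gamma> of (a, b, c) \<Rightarrow>
     Abs_fps (\<lambda>n. \<Sum>i\<le>n. \<Sum>j\<le>n. \<Sum>k\<le>n. coeff3 g i j k * fps_nth (a ^ i * b ^ j * c ^ k) n))"

definition curve_ideal :: "arc \<Rightarrow> ser3 set" where
  "curve_ideal \<gamma> = {g. subst3 g \<gamma> = 0}"

text \<open>An (irreducible) formal curve at 0 is identified with its (prime) ideal,
  which is the ideal of a non-constant formal arc.\<close>
definition formal_curve :: "ser3 set \<Rightarrow> bool" where
  "formal_curve C \<longleftrightarrow> (\<exists>\<gamma>. is_arc \<gamma> \<and> C = curve_ideal \<gamma>)"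

definition invariant_curve :: "ser3 \<times> ser3 \<times> ser3 \<Rightarrow> ser3 set \<Rightarrow> bool" where
  "invariant_curve F C \<longleftrightarrow> (\<forall>g\<in>C. comp3 g F \<in> C)"

definition contained_in_E :: "ser3 set \<Rightarrow> bool" where
  "contained_in_E C \<longleftrightarrow> Z3 \<in> C"

definition smooth_curve :: "ser3 set \<Rightarrow> bool" where
  "smooth_curve C \<longleftrightarrow> (\<exists>a b c. is_arc (a, b, c) \<and> C = curve_ideal (a, b, c) \<and>
      (fps_nth a 1 \<noteq> 0 \<or> fps_nth b 1 \<noteq> 0 \<or> fps_nth c 1 \<noteq> 0))"

definition transverse_E :: "ser3 set \<Rightarrow> bool" where
  "transverse_E C \<longleftrightarrow> (\<exists>a b c. is_arc (a, b, c) \<and> C = curve_ideal (a, b, c) \<and>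
      fps_nth c 1 \<noteq> 0)"

definition spike :: "nat \<Rightarrow> complex \<Rightarrow> complex \<Rightarrow> ser3 \<Rightarrow> ser3 \<Rightarrow> ser3 \<Rightarrow> ser3 \<times> ser3 \<times> ser3" where
  "spike c lam mu P Q R =
     (X3 + Z3 ^ c * (fps_const (fps_const (fps_const lam)) * X3 + P),
      Y3 + Z3 ^ c * (fps_const (fps_const (fps_const mu)) * Y3 + Q),
      Z3 + Z3 ^ (c + 1) * R)"

end

theory Submission
  imports Defs "HOL-Computational_Algebra.Polynomial"
begin
unbundle fps_syntax

definition cst3 :: "complex \<Rightarrow> ser3" where "cst3 a = fps_const (fps_const (fps_const a))"
definition mm3 :: "nat \<Rightarrow> nat \<Rightarrow> nat \<Rightarrow> ser3" where "mm3 i j k = X3^i * Y3^j * Z3^k"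

lemma coeff3_add[simp]: "coeff3 (g + h) i j k = coeff3 g i j k + coeff3 h i j k"
  by (simp add: coeff3_def)
lemma coeff3_diff[simp]: "coeff3 (g - h) i j k = coeff3 g i j k - coeff3 h i j k"
  by (simp add: coeff3_def)
lemma coeff3_uminus[simp]: "coeff3 (- g) i j k = - coeff3 g i j k"
  by (simp add: coeff3_def)
lemma coeff3_0[simp]: "coeff3 0 i j k = 0"
  by (simp add: coeff3_def)
lemma coeff3_sum: "coeff3 (sum f S) i j k = (\<Sum>s\<in>S. coeff3 (f s) i j k)"
  by (induct S rule: infinite_finite_induct) auto
lemma coeff3_cst_mult[simp]: "coeff3 (cst3 a * g) i j k = a * coeff3 g i j k"
  by (simp add: coeff3_def cst3_def)
lemma coeff3_cst[simp]: "coeff3 (cst3 a) i j k = (if i = 0 \<and> j = 0 \<and> k = 0 then a else 0)"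
  by (simp add: coeff3_def cst3_def fps_const_def)
lemma coeff3_mult: "coeff3 (g*h) I J K = (\<Sum>k\<le>K. \<Sum>j\<le>J. \<Sum>i\<le>I. coeff3 g i j k * coeff3 h (I-i) (J-j) (K-k))"
  by (simp add: coeff3_def fps_mult_nth atLeast0AtMost fps_sum_nth sum_distrib_left sum_distrib_right mult.assoc)
lemma coeff3_ext: "(\<And>i j k. coeff3 g i j k = coeff3 h i j k) \<Longrightarrow> g = h"
  by (simp add: coeff3_def fps_eq_iff)

lemma coeff3_mm3: "coeff3 (mm3 i j k) p q r = (if p = i \<and> q = j \<and> r = k then 1 else 0)"
proof -
  have "mm3 i j k = fps_const (fps_const (fps_X^i) * fps_X^j) * fps_X^k"
    by (simp add: mm3_def X3_def Y3_def Z3_def fps_const_power fps_const_mult)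
  then show ?thesis
    by (auto simp add: coeff3_def fps_X_power_mult_right_nth fps_const_def)
qed

lemma mm3_mult: "mm3 i j k * mm3 i' j' k' = mm3 (i+i') (j+j') (k+k')"
  by (simp add: mm3_def power_add ac_simps)

lemma mm3_0: "mm3 0 0 0 = 1" by (simp add: mm3_def)

lemma in_max_pow_mult:
  assumes "in_max_pow g d" "in_max_pow h e"
  shows "in_max_pow (g*h) (d+e)"
  unfolding in_max_pow_def
proof (intro allI impI)
  fix I J K assume "I + J + K < d + e"
  have "coeff3 g i j k * coeff3 h (I-i) (J-j) (K-k) = 0" if "i \<le> I" "j \<le> J" "k \<le> K" for i j k
  proof (cases "i + j + k < d")
    case True then show ?thesis using assms(1) by (simp add: in_max_pow_def)
  next
    case False
    then have "(I-i) + (J-j) + (K-k) < e" using that \<open>I + J + K < d + e\<close> by linarith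
    then show ?thesis using assms(2) by (simp add: in_max_pow_def)
  qed
  then show "coeff3 (g*h) I J K = 0" unfolding coeff3_mult by (intro sum.neutral ballI) auto
qed

lemma in_max_pow_add: "in_max_pow g d \<Longrightarrow> in_max_pow h d \<Longrightarrow> in_max_pow (g+h) d"
  by (simp add: in_max_pow_def)
lemma in_max_pow_diff: "in_max_pow g d \<Longrightarrow> in_max_pow h d \<Longrightarrow> in_max_pow (g-h) d"
  by (simp add: in_max_pow_def)
lemma in_max_pow_0[simp]: "in_max_pow g 0"
  by (simp add: in_max_pow_def)
lemma in_max_pow_mono: "in_max_pow g d \<Longrightarrow> e \<le> d \<Longrightarrow> in_max_pow g e"
  by (simp add: in_max_pow_def)
lemma in_max_pow_cst_mult: "in_max_pow g d \<Longrightarrow> in_max_pow (cst3 a * g) d"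
  by (simp add: in_max_pow_def)
lemma in_max_pow_power: "in_max_pow g d \<Longrightarrow> in_max_pow (g^n) (n*d)"
proof (induct n)
  case 0 then show ?case by simp
next
  case (Suc n)
  then show ?case using in_max_pow_mult[of g d "g^n" "n*d"] by (simp add: add.commute)
qed
lemma in_max_pow_X3: "in_max_pow X3 1"
  using coeff3_mm3[of 1 0 0] by (simp add: in_max_pow_def mm3_def)
lemma in_max_pow_Y3: "in_max_pow Y3 1"
  using coeff3_mm3[of 0 1 0] by (simp add: in_max_pow_def mm3_def)
lemma in_max_pow_Z3: "in_max_pow Z3 1"
  using coeff3_mm3[of 0 0 1] by (simp add: in_max_pow_def mm3_def)


definition zc :: "arc \<Rightarrow> bool" where
  "zc \<gamma> = (case \<gamma> of (a,b,c) \<Rightarrow> a$0 = 0 \<and> b$0 = 0 \<and> c$0 = 0)"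
definition Mon :: "arc \<Rightarrow> nat\<times>nat\<times>nat \<Rightarrow> complex fps" where
  "Mon \<gamma> s = (case \<gamma> of (a,b,c) \<Rightarrow> a^(fst s) * b^(fst (snd s)) * c^(snd (snd s)))"
definition M3 :: "nat\<times>nat\<times>nat \<Rightarrow> ser3" where
  "M3 s = mm3 (fst s) (fst (snd s)) (snd (snd s))"
definition C3 :: "ser3 \<Rightarrow> nat\<times>nat\<times>nat \<Rightarrow> complex" where
  "C3 g s = coeff3 g (fst s) (fst (snd s)) (snd (snd s))"
definition tdeg :: "nat\<times>nat\<times>nat \<Rightarrow> nat" where
  "tdeg s = fst s + fst (snd s) + snd (snd s)"
definition tadd :: "nat\<times>nat\<times>nat \<Rightarrow> nat\<times>nat\<times>nat \<Rightarrow> nat\<times>nat\<times>nat" where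
  "tadd s t = (fst s + fst t, fst (snd s) + fst (snd t), snd (snd s) + snd (snd t))"
definition cube :: "nat \<Rightarrow> (nat\<times>nat\<times>nat) set" where
  "cube N = {..N} \<times> {..N} \<times> {..N}"
definition ordge :: "complex fps \<Rightarrow> nat \<Rightarrow> bool" where
  "ordge f N = (\<forall>l<N. f$l = 0)"
definition agr :: "nat \<Rightarrow> complex fps \<Rightarrow> complex fps \<Rightarrow> bool" where
  "agr n f g = (\<forall>l\<le>n. f$l = g$l)"
definition tr3 :: "nat \<Rightarrow> ser3 \<Rightarrow> ser3" where
  "tr3 N g = (\<Sum>s\<in>cube N. cst3 (C3 g s) * M3 s)"
definition trs :: "nat \<Rightarrow> ser3 \<Rightarrow> arc \<Rightarrow> complex fps" where
  "trs N g \<gamma> = (\<Sum>s\<in>cube N. fps_const (C3 g s) * Mon \<gamma> s)"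

lemma finite_cube[simp]: "finite (cube N)" by (simp add: cube_def)
lemma zc_simp[simp]: "zc (a,b,c) = (a$0 = 0 \<and> b$0 = 0 \<and> c$0 = 0)" by (simp add: zc_def)
lemma Mon_simp: "Mon (a,b,c) (i,j,k) = a^i*b^j*c^k" by (simp add: Mon_def)

lemma ordge_mult: "ordge f d \<Longrightarrow> ordge g e \<Longrightarrow> ordge (f*g) (d+e)"
  unfolding ordge_def fps_mult_nth
proof (intro allI impI sum.neutral ballI)
  fix l i assume "\<forall>l<d. f $ l = 0" "\<forall>l<e. g $ l = 0" "l < d + e" "i \<in> {0..l}"
  then show "f $ i * g $ (l - i) = 0"
    by (cases "i < d") auto
qed

lemma ordge_power: "ordge f d \<Longrightarrow> ordge (f^i) (i*d)"
proof (induct i)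
  case 0 then show ?case by (simp add: ordge_def)
next
  case (Suc i) then show ?case using ordge_mult[of f d "f^i" "i*d"] by (simp add: add.commute)
qed

lemma ordge_1: "f$0 = 0 \<Longrightarrow> ordge f 1" by (simp add: ordge_def)

lemma ordge_Mon: "zc \<gamma> \<Longrightarrow> ordge (Mon \<gamma> s) (tdeg s)"
proof (cases \<gamma>)
  case (fields a b c)
  assume "zc \<gamma>"
  then have "ordge a 1" "ordge b 1" "ordge c 1" using fields by (auto simp: ordge_def)
  then have "ordge (a^(fst s)) (fst s)" "ordge (b^(fst (snd s))) (fst (snd s))" "ordge (c^(snd (snd s))) (snd (snd s))"
    using ordge_power by fastforce+
  then show ?thesis using fields by (simp add: Mon_def tdeg_def ordge_mult)
qed

lemma sum_atMost_shrink:
  fixes n N :: nat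
  assumes "n \<le> N" "\<And>i. n < i \<Longrightarrow> i \<le> N \<Longrightarrow> F i = 0"
  shows "(\<Sum>i\<le>N. F i) = (\<Sum>i\<le>n. F i)"
proof (rule sum.mono_neutral_right)
  show "\<forall>i\<in>{..N} - {..n}. F i = 0"
  proof
    fix i assume "i \<in> {..N} - {..n}"
    then have "n < i" "i \<le> N" by auto
    then show "F i = 0" by (rule assms(2))
  qed
qed (use assms(1) in auto)

lemma subst3_nth_cube:
  assumes "zc \<gamma>" "n \<le> N"
  shows "subst3 g \<gamma> $ n = (\<Sum>s\<in>cube N. C3 g s * Mon \<gamma> s $ n)"
proof -
  obtain a b c where g: "\<gamma> = (a,b,c)" by (cases \<gamma>)
  have z: "Mon \<gamma> (i,j,k) $ n = 0" if "n < i + j + k" for i j k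
    using ordge_Mon[OF assms(1), of "(i,j,k)"] that by (simp add: ordge_def tdeg_def)
  let ?T = "\<lambda>i j k. coeff3 g i j k * Mon \<gamma> (i,j,k) $ n"
  have "(\<Sum>s\<in>cube N. C3 g s * Mon \<gamma> s $ n) = (\<Sum>i\<le>N. \<Sum>j\<le>N. \<Sum>k\<le>N. ?T i j k)"
    by (simp add: cube_def sum.cartesian_product C3_def split_beta)
  also have "\<dots> = (\<Sum>i\<le>N. \<Sum>j\<le>N. \<Sum>k\<le>n. ?T i j k)"
    by (intro sum.cong refl sum_atMost_shrink assms) (simp add: z)
  also have "\<dots> = (\<Sum>i\<le>N. \<Sum>j\<le>n. \<Sum>k\<le>n. ?T i j k)"
    by (intro sum.cong refl sum_atMost_shrink assms) (simp add: z)
  also have "\<dots> = (\<Sum>i\<le>n. \<Sum>j\<le>n. \<Sum>k\<le>n. ?T i j k)"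
    by (intro sum.cong refl sum_atMost_shrink assms) (simp add: z)
  also have "\<dots> = subst3 g \<gamma> $ n"
    by (simp add: subst3_def g Mon_simp)
  finally show ?thesis by simp
qed

lemma subst3_trs: "zc \<gamma> \<Longrightarrow> n \<le> N \<Longrightarrow> subst3 g \<gamma> $ n = trs N g \<gamma> $ n"
  by (simp add: subst3_nth_cube trs_def fps_sum_nth)

lemma subst3_add: "subst3 (g + h) \<gamma> = subst3 g \<gamma> + subst3 h \<gamma>"
  by (cases \<gamma>) (simp add: subst3_def fps_eq_iff distrib_right sum.distrib)
lemma subst3_diff: "subst3 (g - h) \<gamma> = subst3 g \<gamma> - subst3 h \<gamma>"
  by (cases \<gamma>) (simp add: subst3_def fps_eq_iff left_diff_distrib sum_subtractf)
lemma subst3_zero[simp]: "subst3 0 \<gamma> = 0"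
  by (cases \<gamma>) (simp add: subst3_def fps_eq_iff)
lemma subst3_cst_mult: "subst3 (cst3 a * g) \<gamma> = fps_const a * subst3 g \<gamma>"
  by (cases \<gamma>) (simp add: subst3_def fps_eq_iff sum_distrib_left mult.assoc)
lemma subst3_sum: "subst3 (sum f S) \<gamma> = (\<Sum>s\<in>S. subst3 (f s) \<gamma>)"
  by (induct S rule: infinite_finite_induct) (auto simp: subst3_add)

lemma subst3_M3: assumes "zc \<gamma>" shows "subst3 (M3 t) \<gamma> = Mon \<gamma> t"
proof (rule fps_ext)
  fix n
  let ?N = "n + tdeg t"
  have "subst3 (M3 t) \<gamma> $ n = (\<Sum>s\<in>cube ?N. (if s = t then Mon \<gamma> s $ n else 0))"
    unfolding subst3_nth_cube[OF assms, of n ?N, OF le_add1]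
    by (intro sum.cong refl) (auto simp: C3_def M3_def coeff3_mm3 prod_eq_iff)
  also have "\<dots> = Mon \<gamma> t $ n"
  proof -
    have "t \<in> cube (n + tdeg t)" by (cases t) (auto simp: cube_def tdeg_def)
    then show ?thesis by (subst sum.delta) auto
  qed
  finally show "subst3 (M3 t) \<gamma> $ n = Mon \<gamma> t $ n" .
qed

lemma subst3_tr3: "zc \<gamma> \<Longrightarrow> subst3 (tr3 N g) \<gamma> = trs N g \<gamma>"
  by (simp add: tr3_def trs_def subst3_sum subst3_cst_mult subst3_M3)

lemma coeff3_tr3: "coeff3 (tr3 N g) p q r = (if p \<le> N \<and> q \<le> N \<and> r \<le> N then coeff3 g p q r else 0)"
proof -
  have "coeff3 (tr3 N g) p q r = (\<Sum>s\<in>cube N. if s = (p,q,r) then C3 g s else 0)"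
    unfolding tr3_def coeff3_sum
    by (intro sum.cong refl) (auto simp: M3_def coeff3_mm3 prod_eq_iff)
  also have "\<dots> = (if p \<le> N \<and> q \<le> N \<and> r \<le> N then coeff3 g p q r else 0)"
    by (subst sum.delta) (auto simp: cube_def C3_def)
  finally show ?thesis .
qed

lemma in_max_pow_tr3: "in_max_pow (g - tr3 N g) (N+1)"
  by (auto simp: in_max_pow_def coeff3_tr3)

lemma ordge_subst3: assumes "in_max_pow f d" "zc \<gamma>" shows "ordge (subst3 f \<gamma>) d"
  unfolding ordge_def
proof (intro allI impI)
  fix l assume "l < d"
  have "C3 f s * Mon \<gamma> s $ l = 0" for s
  proof (cases "tdeg s < d")
    case True then show ?thesis using assms(1) by (simp add: in_max_pow_def C3_def tdeg_def)
  next
    case False then show ?thesis using ordge_Mon[OF assms(2), of s] \<open>l < d\<close> by (simp add: ordge_def)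
  qed
  then show "subst3 f \<gamma> $ l = 0" by (simp add: subst3_nth_cube[OF assms(2) order_refl] sum.neutral)
qed

lemma agr_mult: "agr n f f' \<Longrightarrow> agr n g g' \<Longrightarrow> agr n (f*g) (f'*g')"
  by (simp add: agr_def fps_mult_nth)

lemma Mon_tadd: "Mon \<gamma> (tadd s t) = Mon \<gamma> s * Mon \<gamma> t"
  by (cases \<gamma>) (simp add: Mon_def tadd_def power_add ac_simps)
lemma M3_tadd: "M3 (tadd s t) = M3 s * M3 t"
  by (simp add: M3_def tadd_def mm3_mult)

lemma subst3_tr3_mult: assumes "zc \<gamma>"
  shows "subst3 (tr3 N g * tr3 N h) \<gamma> = trs N g \<gamma> * trs N h \<gamma>"
proof -
  have "tr3 N g * tr3 N h = (\<Sum>s\<in>cube N. \<Sum>t\<in>cube N. cst3 (C3 g s * C3 h t) * M3 (tadd s t))"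
    unfolding tr3_def sum_product M3_tadd
    by (intro sum.cong refl) (simp add: cst3_def ac_simps)
  then have "subst3 (tr3 N g * tr3 N h) \<gamma> = (\<Sum>s\<in>cube N. \<Sum>t\<in>cube N. fps_const (C3 g s * C3 h t) * Mon \<gamma> (tadd s t))"
    by (simp add: subst3_sum subst3_cst_mult subst3_M3[OF assms])
  also have "\<dots> = trs N g \<gamma> * trs N h \<gamma>"
    unfolding trs_def sum_product Mon_tadd
    by (intro sum.cong refl) (simp add: ac_simps)
  finally show ?thesis .
qed

lemma subst3_mult: assumes "zc \<gamma>" shows "subst3 (g * h) \<gamma> = subst3 g \<gamma> * subst3 h \<gamma>"
proof (rule fps_ext)
  fix n
  define D where "D = (g - tr3 n g) * h + tr3 n g * (h - tr3 n h)"
  have gh: "g * h = tr3 n g * tr3 n h + D" by (simp add: D_def algebra_simps)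
  have "in_max_pow D (n+1)" unfolding D_def
    using in_max_pow_mult[OF in_max_pow_tr3[of g n] in_max_pow_0[of h]]
      in_max_pow_mult[OF in_max_pow_0[of "tr3 n g"] in_max_pow_tr3[of h n]]
    by (intro in_max_pow_add) auto
  then have "subst3 D \<gamma> $ n = 0" using ordge_subst3[OF _ assms] by (simp add: ordge_def)
  then have "subst3 (g*h) \<gamma> $ n = (trs n g \<gamma> * trs n h \<gamma>) $ n"
    by (simp add: gh subst3_add subst3_tr3_mult[OF assms])
  also have "\<dots> = (subst3 g \<gamma> * subst3 h \<gamma>) $ n"
    using agr_mult[of n "trs n g \<gamma>" "subst3 g \<gamma>" "trs n h \<gamma>" "subst3 h \<gamma>"]
    by (simp add: agr_def subst3_trs[OF assms])
  finally show "subst3 (g*h) \<gamma> $ n = (subst3 g \<gamma> * subst3 h \<gamma>) $ n" .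
qed

lemma subst3_one: assumes "zc \<gamma>" shows "subst3 1 \<gamma> = 1"
  using subst3_M3[OF assms, of "(0,0,0)"] by (simp add: M3_def mm3_0 Mon_def split: prod.splits)

lemma subst3_power: assumes "zc \<gamma>" shows "subst3 (g ^ n) \<gamma> = subst3 g \<gamma> ^ n"
  by (induct n) (simp_all add: subst3_one[OF assms] subst3_mult[OF assms])

lemma subst3_cst: assumes "zc \<gamma>" shows "subst3 (cst3 a) \<gamma> = fps_const a"
  using subst3_cst_mult[of a 1 \<gamma>] by (simp add: subst3_one[OF assms])

lemma subst3_X3: "subst3 X3 (a,b,c) = a" if "zc (a,b,c)"
  using subst3_M3[OF that, of "(1,0,0)"] by (simp add: M3_def mm3_def Mon_def)
lemma subst3_Y3: "subst3 Y3 (a,b,c) = b" if "zc (a,b,c)"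
  using subst3_M3[OF that, of "(0,1,0)"] by (simp add: M3_def mm3_def Mon_def)
lemma subst3_Z3: "subst3 Z3 (a,b,c) = c" if "zc (a,b,c)"
  using subst3_M3[OF that, of "(0,0,1)"] by (simp add: M3_def mm3_def Mon_def)


definition FMon :: "ser3 \<times> ser3 \<times> ser3 \<Rightarrow> nat\<times>nat\<times>nat \<Rightarrow> ser3" where
  "FMon F s = (case F of (F1,F2,F3) \<Rightarrow> F1^(fst s) * F2^(fst (snd s)) * F3^(snd (snd s)))"
definition appF :: "ser3 \<times> ser3 \<times> ser3 \<Rightarrow> arc \<Rightarrow> arc" where
  "appF F \<gamma> = (case F of (F1,F2,F3) \<Rightarrow> (subst3 F1 \<gamma>, subst3 F2 \<gamma>, subst3 F3 \<gamma>))"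
definition zcF :: "ser3 \<times> ser3 \<times> ser3 \<Rightarrow> bool" where
  "zcF F = (case F of (F1,F2,F3) \<Rightarrow> in_max_pow F1 1 \<and> in_max_pow F2 1 \<and> in_max_pow F3 1)"

lemma in_max_pow_FMon: "zcF F \<Longrightarrow> in_max_pow (FMon F s) (tdeg s)"
proof (cases F)
  case (fields F1 F2 F3)
  assume "zcF F"
  then have "in_max_pow F1 1" "in_max_pow F2 1" "in_max_pow F3 1" using fields by (auto simp: zcF_def)
  then have "in_max_pow (F1^(fst s)) (fst s)" "in_max_pow (F2^(fst (snd s))) (fst (snd s))"
      "in_max_pow (F3^(snd (snd s))) (snd (snd s))"
    using in_max_pow_power by fastforce+
  then show ?thesis using fields by (simp add: FMon_def tdeg_def in_max_pow_mult)
qed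

lemma zc_appF: "zcF F \<Longrightarrow> zc \<gamma> \<Longrightarrow> zc (appF F \<gamma>)"
  using ordge_subst3[of _ 1 \<gamma>] by (auto simp: zcF_def appF_def ordge_def split: prod.splits)

lemma subst3_FMon: "zc \<gamma> \<Longrightarrow> subst3 (FMon F s) \<gamma> = Mon (appF F \<gamma>) s"
  by (cases F) (simp add: FMon_def appF_def Mon_def subst3_mult subst3_power)

lemma coeff3_comp3: "coeff3 (comp3 g F) p q r = (\<Sum>s\<in>cube (p+q+r). C3 g s * coeff3 (FMon F s) p q r)"
  by (cases F) (simp add: comp3_def mk3_def coeff3_def cube_def sum.cartesian_product split_beta C3_def FMon_def)

lemma comp3_approx:
  assumes "zcF F"
  shows "in_max_pow (comp3 g F - (\<Sum>s\<in>cube n. cst3 (C3 g s) * FMon F s)) (n+1)"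
  unfolding in_max_pow_def
proof (intro allI impI)
  fix p q r assume "p + q + r < n + 1"
  have "(\<Sum>s\<in>cube n. C3 g s * coeff3 (FMon F s) p q r) = (\<Sum>s\<in>cube (p+q+r). C3 g s * coeff3 (FMon F s) p q r)"
  proof (rule sum.mono_neutral_right)
    show "cube (p+q+r) \<subseteq> cube n" using \<open>p + q + r < n + 1\<close> by (auto simp: cube_def)
    show "\<forall>s\<in>cube n - cube (p + q + r). C3 g s * coeff3 (FMon F s) p q r = 0"
    proof
      fix s assume "s \<in> cube n - cube (p + q + r)"
      then have "p + q + r < tdeg s" by (cases s) (auto simp: cube_def tdeg_def)
      then show "C3 g s * coeff3 (FMon F s) p q r = 0"
        using in_max_pow_FMon[OF assms, of s] by (simp add: in_max_pow_def)
    qed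
  qed simp
  then show "coeff3 (comp3 g F - (\<Sum>s\<in>cube n. cst3 (C3 g s) * FMon F s)) p q r = 0"
    by (simp add: coeff3_comp3 coeff3_sum)
qed

lemma subst3_comp3:
  assumes "zcF F" "zc \<gamma>"
  shows "subst3 (comp3 g F) \<gamma> = subst3 g (appF F \<gamma>)"
proof (rule fps_ext)
  fix n
  let ?S = "\<Sum>s\<in>cube n. cst3 (C3 g s) * FMon F s"
  have "subst3 (comp3 g F - ?S) \<gamma> $ n = 0"
    using ordge_subst3[OF comp3_approx[OF assms(1), of g n] assms(2)] by (simp add: ordge_def)
  then have "subst3 (comp3 g F) \<gamma> $ n = subst3 ?S \<gamma> $ n" by (simp add: subst3_diff)
  also have "subst3 ?S \<gamma> = trs n g (appF F \<gamma>)"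
    by (simp add: subst3_sum subst3_cst_mult subst3_FMon[OF assms(2)] trs_def)
  also have "trs n g (appF F \<gamma>) $ n = subst3 g (appF F \<gamma>) $ n"
    using subst3_trs[OF zc_appF[OF assms], of n n g] by simp
  finally show "subst3 (comp3 g F) \<gamma> $ n = subst3 g (appF F \<gamma>) $ n" .
qed

definition arc_comp :: "arc \<Rightarrow> complex fps \<Rightarrow> arc" where
  "arc_comp \<gamma> \<sigma> = (case \<gamma> of (a,b,c) \<Rightarrow> (a oo \<sigma>, b oo \<sigma>, c oo \<sigma>))"

lemma zc_arc_comp: "zc \<gamma> \<Longrightarrow> zc (arc_comp \<gamma> \<sigma>)"
  by (cases \<gamma>) (simp add: arc_comp_def)

lemma Mon_arc_comp: "zc \<gamma> \<Longrightarrow> \<sigma>$0 = 0 \<Longrightarrow> Mon (arc_comp \<gamma> \<sigma>) s = Mon \<gamma> s oo \<sigma>"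
  by (cases \<gamma>) (simp add: arc_comp_def Mon_def fps_compose_mult_distrib fps_compose_power)

lemma agr_compose: "agr n f g \<Longrightarrow> agr n (f oo \<sigma>) (g oo \<sigma>)"
  by (simp add: agr_def fps_compose_nth)

lemma subst3_arc_comp:
  assumes "zc \<gamma>" "\<sigma>$0 = 0"
  shows "subst3 g (arc_comp \<gamma> \<sigma>) = subst3 g \<gamma> oo \<sigma>"
proof (rule fps_ext)
  fix n
  have "subst3 g (arc_comp \<gamma> \<sigma>) $ n = trs n g (arc_comp \<gamma> \<sigma>) $ n"
    by (rule subst3_trs[OF zc_arc_comp[OF assms(1)] order_refl])
  also have "trs n g (arc_comp \<gamma> \<sigma>) = trs n g \<gamma> oo \<sigma>"
    by (simp add: trs_def Mon_arc_comp[OF assms] fps_compose_sum_distrib fps_compose_mult_distrib[OF assms(2)])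
  also have "(trs n g \<gamma> oo \<sigma>) $ n = (subst3 g \<gamma> oo \<sigma>) $ n"
    using agr_compose[of n "trs n g \<gamma>" "subst3 g \<gamma>" \<sigma>] subst3_trs[OF assms(1)]
    by (simp add: agr_def)
  finally show "subst3 g (arc_comp \<gamma> \<sigma>) $ n = (subst3 g \<gamma> oo \<sigma>) $ n" .
qed

lemma ordge_add: "ordge f N \<Longrightarrow> ordge g N \<Longrightarrow> ordge (f+g) N" by (simp add: ordge_def)
lemma ordge_diff: "ordge f N \<Longrightarrow> ordge g N \<Longrightarrow> ordge (f-g) N" by (simp add: ordge_def)
lemma ordge_mono: "ordge f N \<Longrightarrow> M \<le> N \<Longrightarrow> ordge f M" by (simp add: ordge_def)
lemma ordge_0[simp]: "ordge 0 N" "ordge f 0" by (simp_all add: ordge_def)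
lemma ordge_uminus: "ordge f N \<Longrightarrow> ordge (-f) N" by (simp add: ordge_def)

lemma ordge_prod_diff:
  assumes "ordge (X - X') (N + e1 - 1)" "ordge (Y - Y') (N + e2 - 1)" "ordge X e1" "ordge Y' e2" "1 \<le> N"
  shows "ordge (X*Y - X'*Y') (N + e1 + e2 - 1)"
proof -
  have "X*Y - X'*Y' = X*(Y - Y') + (X - X')*Y'" by (simp add: algebra_simps)
  moreover have "ordge (X*(Y - Y')) (N + e1 + e2 - 1)"
    by (rule ordge_mono[OF ordge_mult[OF assms(3) assms(2)]]) (use assms(5) in simp)
  moreover have "ordge ((X - X')*Y') (N + e1 + e2 - 1)"
    by (rule ordge_mono[OF ordge_mult[OF assms(1) assms(4)]]) (use assms(5) in simp)
  ultimately show ?thesis by (simp add: ordge_add)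
qed

lemma ordge_power_diff:
  assumes "ordge (x - x') N" "ordge x 1" "ordge x' 1" "1 \<le> N"
  shows "ordge (x^i - x'^i) (N + i - 1)"
proof (induct i)
  case 0 then show ?case by simp
next
  case (Suc i)
  have "ordge (x * x^i - x' * x'^i) (N + 1 + i - 1)"
    using ordge_prod_diff[of x x' N 1 "x^i" "x'^i" i] assms Suc ordge_power[OF assms(3), of i]
    by simp
  then show ?case by simp
qed

lemma ordge_Mon_diff:
  assumes "zc (a,b,c)" "zc (a',b',c')" "ordge (a-a') N" "ordge (b-b') N" "ordge (c-c') N" "1 \<le> N"
  shows "ordge (Mon (a,b,c) s - Mon (a',b',c') s) (N + tdeg s - 1)"
proof -
  obtain i j k where s: "s = (i,j,k)" by (cases s)
  have o: "ordge a 1" "ordge a' 1" "ordge b 1" "ordge b' 1" "ordge c 1" "ordge c' 1"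
    using assms(1,2) by (auto simp: ordge_def)
  have pa: "ordge (a^i - a'^i) (N + i - 1)" using ordge_power_diff[OF assms(3) o(1,2) assms(6)] .
  have pb: "ordge (b^j - b'^j) (N + j - 1)" using ordge_power_diff[OF assms(4) o(3,4) assms(6)] .
  have pc: "ordge (c^k - c'^k) (N + k - 1)" using ordge_power_diff[OF assms(5) o(5,6) assms(6)] .
  have ab: "ordge (a^i*b^j - a'^i*b'^j) (N + i + j - 1)"
    by (rule ordge_prod_diff[OF pa pb _ _ assms(6)]) (use ordge_power[OF o(1)] ordge_power[OF o(4)] in auto)
  have ab': "ordge (a^i*b^j - a'^i*b'^j) (N + (i + j) - 1)" using ab by (simp add: add.assoc)
  have o1: "ordge (a^i*b^j) (i+j)"
    using ordge_mult[OF ordge_power[OF o(1), of i] ordge_power[OF o(3), of j]] by simp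
  have o2: "ordge (c'^k) k" using ordge_power[OF o(6), of k] by simp
  have "ordge (a^i*b^j*c^k - a'^i*b'^j*c'^k) (N + (i+j) + k - 1)"
    by (rule ordge_prod_diff[OF ab' pc o1 o2 assms(6)])
  then show ?thesis by (simp add: s Mon_def tdeg_def add.assoc)
qed

lemma subst3_lip:
  assumes "in_max_pow g d" "1 \<le> d" "1 \<le> N" "zc (a,b,c)" "zc (a',b',c')"
    "ordge (a-a') N" "ordge (b-b') N" "ordge (c-c') N"
  shows "ordge (subst3 g (a,b,c) - subst3 g (a',b',c')) (N + d - 1)"
  unfolding ordge_def
proof (intro allI impI)
  fix l assume l: "l < N + d - 1"
  have z: "C3 g s * (Mon (a,b,c) s $ l - Mon (a',b',c') s $ l) = 0" for s
  proof (cases "tdeg s < d")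
    case True then show ?thesis using assms(1) by (simp add: in_max_pow_def C3_def tdeg_def)
  next
    case False
    then have "l < N + tdeg s - 1" using l by linarith
    then show ?thesis using ordge_Mon_diff[OF assms(4,5,6,7,8,3), of s] by (simp add: ordge_def)
  qed
  have "(subst3 g (a,b,c) - subst3 g (a',b',c')) $ l = (\<Sum>s\<in>cube l. C3 g s * (Mon (a,b,c) s $ l - Mon (a',b',c') s $ l))"
    by (simp add: subst3_nth_cube[OF assms(4) order_refl] subst3_nth_cube[OF assms(5) order_refl]
        sum_subtractf right_diff_distrib)
  also have "\<dots> = 0" by (rule sum.neutral) (use z in auto)
  finally show "(subst3 g (a,b,c) - subst3 g (a',b',c')) $ l = 0" .
qed


lemma ordge_shift: "ordge f (n + c) \<Longrightarrow> ordge (fps_shift c f) n"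
  by (simp add: ordge_def)
lemma X_shift: "ordge f c \<Longrightarrow> fps_X^c * fps_shift c f = f"
  by (rule fps_ext) (simp add: fps_X_power_mult_nth ordge_def)
lemma ordge_Xpow_mult: "ordge f n \<Longrightarrow> ordge (fps_X^c * f) (n + c)"
  by (simp add: ordge_def fps_X_power_mult_nth)
lemma ordge_const_mult: "ordge f n \<Longrightarrow> ordge (fps_const a * f) n"
  by (simp add: ordge_def)
lemma ordge_X: "ordge fps_X 1" by (simp add: ordge_def)

lemma ordge_eq: "(\<And>n. ordge (f - g) n) \<Longrightarrow> f = g"
proof (rule fps_ext)
  fix n assume "\<And>n. ordge (f - g) n"
  then have "(f - g) $ n = 0" using ordge_def[of "f-g" "Suc n"] by auto
  then show "f $ n = g $ n" by simp
qed

lemma compose_diff_nth: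
  fixes f k k' :: "complex fps"
  shows  "((f oo k) - (f oo k')) $ l = (\<Sum>m\<le>l. f $ m * (k^m - k'^m) $ l)"
proof -
  have "((f oo k) - (f oo k')) $ l = (\<Sum>m\<le>l. f$m * k^m$l) - (\<Sum>m\<le>l. f$m * k'^m$l)"
    by (simp add: fps_compose_nth atLeast0AtMost)
  also have "\<dots> = (\<Sum>m\<le>l. f$m * k^m$l - f$m * k'^m$l)" by (simp only: sum_subtractf)
  also have "\<dots> = (\<Sum>m\<le>l. f $ m * (k^m - k'^m) $ l)" by (simp add: right_diff_distrib)
  finally show ?thesis .
qed

lemma ordge_compose_near_id:
  assumes "ordge f n" "ordge (k - fps_X) (c+2)" "k$0 = 0"
  shows "ordge ((f oo k) - f) (n + c + 1)"
  unfolding ordge_def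
proof (intro allI impI)
  fix l assume l: "l < n + c + 1"
  have z: "f $ m * (k^m - fps_X^m) $ l = 0" for m
  proof (cases "m < n")
    case True then show ?thesis using assms(1) by (simp add: ordge_def)
  next
    case False
    have "ordge (k^m - fps_X^m) (c + 2 + m - 1)"
      by (rule ordge_power_diff[OF assms(2)]) (use assms(3) ordge_X in \<open>auto simp: ordge_def\<close>)
    moreover have "l < c + 2 + m - 1" using False l by linarith
    ultimately show ?thesis by (simp add: ordge_def)
  qed
  have "((f oo k) - (f oo fps_X)) $ l = 0" unfolding compose_diff_nth by (rule sum.neutral) (use z in auto)
  then show "((f oo k) - f) $ l = 0" by simp
qed

lemma ordge_compose_close:
  assumes "ordge (k - k') N" "k$0 = 0" "k'$0 = 0" "1 \<le> N"
  shows "ordge ((f oo k) - (f oo k')) N"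
  unfolding ordge_def
proof (intro allI impI)
  fix l assume l: "l < N"
  have z: "f $ m * (k^m - k'^m) $ l = 0" for m
  proof (cases "m = 0")
    case True then show ?thesis by simp
  next
    case False
    have "ordge (k^m - k'^m) (N + m - 1)"
      by (rule ordge_power_diff[OF assms(1)]) (use assms in \<open>auto simp: ordge_def\<close>)
    then show ?thesis using False l by (simp add: ordge_def)
  qed
  show "((f oo k) - (f oo k')) $ l = 0" unfolding compose_diff_nth by (rule sum.neutral) (use z in auto)
qed

lemma subst3_nth0: "in_max_pow g 1 \<Longrightarrow> subst3 g \<gamma> $ 0 = 0"
  by (cases \<gamma>) (simp add: subst3_def in_max_pow_def)

locale spk =
  fixes c :: nat and lam mu :: complex and P Q R :: ser3
  assumes c1: "c \<ge> 1" and lam0: "lam \<noteq> 0" and mu0: "mu \<noteq> 0"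
    and P2: "in_max_pow P 2" and Q2: "in_max_pow Q 2" and R1: "in_max_pow R 1"
begin

definition F where "F = spike c lam mu P Q R"

lemma F_simps: "F = (X3 + Z3 ^ c * (cst3 lam * X3 + P), Y3 + Z3 ^ c * (cst3 mu * Y3 + Q), Z3 + Z3 ^ (c + 1) * R)"
  by (simp add: F_def spike_def cst3_def)

lemma zcF: "zcF F"
proof -
  have zc: "in_max_pow (Z3^c * h) 1" for h
    using in_max_pow_mult[OF in_max_pow_power[OF in_max_pow_Z3, of c] in_max_pow_0[of h]] c1
    by (auto intro: in_max_pow_mono)
  have zr: "in_max_pow (Z3^(c+1) * R) 1"
    using in_max_pow_mult[OF in_max_pow_power[OF in_max_pow_Z3, of "c+1"] in_max_pow_0[of R]]
    by (auto intro: in_max_pow_mono)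
  show ?thesis unfolding F_simps zcF_def prod.case
    by (intro conjI in_max_pow_add zc zr in_max_pow_X3 in_max_pow_Y3 in_max_pow_Z3)
qed

lemma appF_simp:
  assumes "zc (a,b,z)"
  shows "appF F (a,b,z) = (a + z^c * (fps_const lam * a + subst3 P (a,b,z)),
                            b + z^c * (fps_const mu * b + subst3 Q (a,b,z)),
                            z + z^(c+1) * subst3 R (a,b,z))"
  by (simp add: F_simps appF_def subst3_add subst3_mult[OF assms] subst3_power[OF assms]
      subst3_cst[OF assms] subst3_X3[OF assms] subst3_Y3[OF assms] subst3_Z3[OF assms])

definition kk :: "complex fps \<Rightarrow> complex fps \<Rightarrow> complex fps" where
  "kk \<phi> \<psi> = fps_X + fps_X^(c+1) * subst3 R (\<phi>, \<psi>, fps_X)"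

definition Tg :: "complex \<Rightarrow> ser3 \<Rightarrow> complex fps \<Rightarrow> complex fps \<Rightarrow> complex fps \<Rightarrow> complex fps" where
  "Tg \<nu> G f \<phi> \<psi> = fps_const (1/\<nu>) * (fps_shift c ((f oo kk \<phi> \<psi>) - f) - subst3 G (\<phi>, \<psi>, fps_X))"

lemma kk0: "kk \<phi> \<psi> $ 0 = 0" by (simp add: kk_def)

lemma kk_near: "ordge (kk \<phi> \<psi> - fps_X) (c+2)"
proof -
  have "ordge (subst3 R (\<phi>, \<psi>, fps_X)) 1" using subst3_nth0[OF R1] by (simp add: ordge_def)
  then have "ordge (fps_X^(c+1) * subst3 R (\<phi>, \<psi>, fps_X)) (1 + (c+1))" by (rule ordge_Xpow_mult)
  then show ?thesis by (simp add: kk_def)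
qed

lemma kk_close:
  assumes "zc (\<phi>,\<psi>,fps_X)" "zc (\<phi>',\<psi>',fps_X)" "ordge (\<phi>-\<phi>') n" "ordge (\<psi>-\<psi>') n" "1 \<le> n"
  shows "ordge (kk \<phi> \<psi> - kk \<phi>' \<psi>') (n + c + 1)"
proof -
  have "ordge (subst3 R (\<phi>, \<psi>, fps_X) - subst3 R (\<phi>', \<psi>', fps_X)) (n + 1 - 1)"
    by (rule subst3_lip[OF R1 _ assms(5) assms(1,2,3,4)]) auto
  then have "ordge (fps_X^(c+1) * (subst3 R (\<phi>, \<psi>, fps_X) - subst3 R (\<phi>', \<psi>', fps_X))) (n + (c+1))"
    by (intro ordge_Xpow_mult) simp
  then show ?thesis by (simp add: kk_def right_diff_distrib add.assoc)
qed

lemma Tg0: "in_max_pow G 2 \<Longrightarrow> Tg \<nu> G f \<phi> \<psi> $ 0 = 0"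
proof -
  assume G: "in_max_pow G 2"
  have "ordge ((f oo kk \<phi> \<psi>) - f) (0 + c + 1)"
    by (rule ordge_compose_near_id[OF _ kk_near kk0]) simp
  then have "fps_shift c ((f oo kk \<phi> \<psi>) - f) $ 0 = 0" by (simp add: ordge_def)
  moreover have "subst3 G (\<phi>, \<psi>, fps_X) $ 0 = 0"
    by (rule subst3_nth0) (rule in_max_pow_mono[OF G], simp)
  ultimately show ?thesis by (simp add: Tg_def)
qed

lemma Tg_contr:
  assumes G: "in_max_pow G 2"
    and z: "zc (\<phi>,\<psi>,fps_X)" "zc (\<phi>',\<psi>',fps_X)"
    and d: "ordge (f - f') n" "ordge (\<phi>-\<phi>') n" "ordge (\<psi>-\<psi>') n"
  shows "ordge (Tg \<nu> G f \<phi> \<psi> - Tg \<nu> G f' \<phi>' \<psi>') (n+1)"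
proof (cases "n = 0")
  case True
  then show ?thesis using Tg0[OF G] by (simp add: ordge_def)
next
  case False
  then have n1: "1 \<le> n" by simp
  let ?k = "kk \<phi> \<psi>" and ?k' = "kk \<phi>' \<psi>'"
  have eq: "((f oo ?k) - f) - ((f' oo ?k') - f') = (((f - f') oo ?k) - (f - f')) + ((f' oo ?k) - (f' oo ?k'))"
    by (simp add: fps_compose_sub_distrib algebra_simps)
  have K1: "ordge (((f - f') oo ?k) - (f - f')) (n + c + 1)"
    by (rule ordge_compose_near_id[OF d(1) kk_near kk0])
  have K2: "ordge ((f' oo ?k) - (f' oo ?k')) (n + c + 1)"
    by (rule ordge_compose_close[OF kk_close[OF z d(2,3) n1] kk0 kk0]) simp
  have A0: "ordge ((((f - f') oo ?k) - (f - f')) + ((f' oo ?k) - (f' oo ?k'))) ((n + 1) + c)"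
    using ordge_add[OF K1 K2] by (simp add: ac_simps)
  have A: "ordge (((f oo ?k) - f) - ((f' oo ?k') - f')) ((n + 1) + c)"
    unfolding eq by (rule A0)
  have B: "ordge (subst3 G (\<phi>, \<psi>, fps_X) - subst3 G (\<phi>', \<psi>', fps_X)) (n + 2 - 1)"
    by (rule subst3_lip[OF G _ n1 z d(2,3)]) auto
  have "Tg \<nu> G f \<phi> \<psi> - Tg \<nu> G f' \<phi>' \<psi>' = fps_const (1/\<nu>) *
      (fps_shift c (((f oo ?k) - f) - ((f' oo ?k') - f')) - (subst3 G (\<phi>, \<psi>, fps_X) - subst3 G (\<phi>', \<psi>', fps_X)))"
    by (simp add: Tg_def fps_shift_diff fps_shift_add algebra_simps)
  moreover have "ordge (fps_shift c (((f oo ?k) - f) - ((f' oo ?k') - f')) - (subst3 G (\<phi>, \<psi>, fps_X) - subst3 G (\<phi>', \<psi>', fps_X))) (n+1)"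
    by (rule ordge_diff[OF ordge_shift[OF A]]) (use B in simp)
  ultimately show ?thesis by (simp add: ordge_const_mult)
qed

end

context spk
begin

definition TT :: "complex fps \<times> complex fps \<Rightarrow> complex fps \<times> complex fps" where
  "TT p = (Tg lam P (fst p) (fst p) (snd p), Tg mu Q (snd p) (fst p) (snd p))"

definition sq :: "nat \<Rightarrow> complex fps \<times> complex fps" where
  "sq j = (TT ^^ j) (0, 0)"

lemma sq_Suc: "sq (Suc j) = TT (sq j)" by (simp add: sq_def)

lemma zc_sq: "zc (fst (sq j), snd (sq j), fps_X)"
  by (cases j) (simp_all add: sq_Suc TT_def Tg0[OF P2] Tg0[OF Q2], simp add: sq_def)

lemma sq_step: "ordge (fst (sq (Suc j)) - fst (sq j)) j \<and> ordge (snd (sq (Suc j)) - snd (sq j)) j"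
proof (induct j)
  case 0 then show ?case by simp
next
  case (Suc j)
  have "ordge (fst (sq (Suc (Suc j))) - fst (sq (Suc j))) (j+1)"
    unfolding sq_Suc[of "Suc j"] sq_Suc[of j] TT_def fst_conv
    by (rule Tg_contr[OF P2]) (use zc_sq[of j] zc_sq[of "Suc j"] Suc in \<open>simp_all add: sq_Suc TT_def\<close>)
  moreover have "ordge (snd (sq (Suc (Suc j))) - snd (sq (Suc j))) (j+1)"
    unfolding sq_Suc[of "Suc j"] sq_Suc[of j] TT_def snd_conv
    by (rule Tg_contr[OF Q2]) (use zc_sq[of j] zc_sq[of "Suc j"] Suc in \<open>simp_all add: sq_Suc TT_def\<close>)
  ultimately show ?case by simp
qed

lemma sq_stable:
  assumes "Suc l \<le> i"
  shows "fst (sq i) $ l = fst (sq (Suc l)) $ l \<and> snd (sq i) $ l = snd (sq (Suc l)) $ l"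
  using assms
proof (induct i rule: dec_induct)
  case base then show ?case by simp
next
  case (step i)
  then have "l < i" by simp
  then have "fst (sq (Suc i)) $ l = fst (sq i) $ l" "snd (sq (Suc i)) $ l = snd (sq i) $ l"
    using sq_step[of i] by (auto simp: ordge_def)
  then show ?case using step by simp
qed

definition phi :: "complex fps" where "phi = Abs_fps (\<lambda>n. fst (sq (Suc n)) $ n)"
definition psi :: "complex fps" where "psi = Abs_fps (\<lambda>n. snd (sq (Suc n)) $ n)"

lemma phi_sq: "ordge (phi - fst (sq j)) j" and psi_sq: "ordge (psi - snd (sq j)) j"
  using sq_stable[of _ j] by (auto simp: ordge_def phi_def psi_def)

lemma zc0: "zc (phi, psi, fps_X)"
  using zc_sq[of 1] sq_stable[of 0 1] by (simp add: phi_def psi_def)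

lemma fix_phi: "Tg lam P phi phi psi = phi" and fix_psi: "Tg mu Q psi phi psi = psi"
proof -
  have "ordge (Tg lam P phi phi psi - phi) j \<and> ordge (Tg mu Q psi phi psi - psi) j" for j
  proof -
    have a: "ordge (Tg lam P phi phi psi - fst (sq (Suc j))) (j+1)"
      unfolding sq_Suc TT_def fst_conv
      by (rule Tg_contr[OF P2 zc0 zc_sq phi_sq phi_sq psi_sq])
    have b: "ordge (Tg mu Q psi phi psi - snd (sq (Suc j))) (j+1)"
      unfolding sq_Suc TT_def snd_conv
      by (rule Tg_contr[OF Q2 zc0 zc_sq psi_sq phi_sq psi_sq])
    have "ordge (Tg lam P phi phi psi - fst (sq (Suc j)) + (fst (sq (Suc j)) - phi)) (j+1)"
      using phi_sq[of "Suc j"] a by (intro ordge_add) (auto dest: ordge_uminus)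
    moreover have "ordge (Tg mu Q psi phi psi - snd (sq (Suc j)) + (snd (sq (Suc j)) - psi)) (j+1)"
      using psi_sq[of "Suc j"] b by (intro ordge_add) (auto dest: ordge_uminus)
    ultimately show ?thesis by (auto intro: ordge_mono)
  qed
  then show "Tg lam P phi phi psi = phi" "Tg mu Q psi phi psi = psi"
    by (auto intro: ordge_eq)
qed

definition k0 where "k0 = kk phi psi"

lemma fix_eq:
  assumes nu: "\<nu> \<noteq> 0" and G: "in_max_pow G 2" and fx: "Tg \<nu> G f phi psi = f"
  shows "(f oo k0) = f + fps_X^c * (fps_const \<nu> * f + subst3 G (phi, psi, fps_X))"
proof -
  let ?D = "(f oo k0) - f"
  have o: "ordge ?D c"
    using ordge_compose_near_id[OF _ kk_near kk0, of f 0 phi psi] by (auto simp: k0_def intro: ordge_mono)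
  let ?S = "fps_shift c ?D - subst3 G (phi, psi, fps_X)"
  have fx': "fps_const (1/\<nu>) * ?S = f" using fx unfolding Tg_def k0_def .
  have "fps_const \<nu> * f = fps_const \<nu> * (fps_const (1/\<nu>) * ?S)"
    by (simp only: fx')
  also have "\<dots> = (fps_const \<nu> * fps_const (1/\<nu>)) * ?S" by (simp only: mult.assoc)
  also have "fps_const \<nu> * fps_const (1/\<nu>) = 1"
    using nu by (simp only: fps_const_mult) simp
  finally have "fps_const \<nu> * f = ?S" by simp
  then have "fps_shift c ?D = fps_const \<nu> * f + subst3 G (phi, psi, fps_X)" by (simp add: algebra_simps)
  then have "?D = fps_X^c * (fps_const \<nu> * f + subst3 G (phi, psi, fps_X))"
    using X_shift[OF o] by simp
  then show ?thesis by (simp add: algebra_simps)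
qed

lemma appF_gamma0: "appF F (phi, psi, fps_X) = arc_comp (phi, psi, fps_X) k0"
proof -
  have k00: "k0 $ 0 = 0" by (simp add: k0_def kk0)
  have "appF F (phi, psi, fps_X) = (phi + fps_X^c * (fps_const lam * phi + subst3 P (phi, psi, fps_X)),
      psi + fps_X^c * (fps_const mu * psi + subst3 Q (phi, psi, fps_X)), k0)"
    using zc0 by (simp add: appF_simp k0_def kk_def)
  also have "\<dots> = ((phi oo k0), (psi oo k0), k0)"
    using fix_eq[OF lam0 P2 fix_phi] fix_eq[OF mu0 Q2 fix_psi] by simp
  also have "\<dots> = arc_comp (phi, psi, fps_X) k0"
    using k00 by (simp add: arc_comp_def)
  finally show ?thesis .
qed

lemma gamma0_invariant: "invariant_curve F (curve_ideal (phi, psi, fps_X))"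
  unfolding invariant_curve_def curve_ideal_def
proof (intro ballI, clarify)
  fix g assume g: "subst3 g (phi, psi, fps_X) = 0"
  have k00: "k0 $ 0 = 0" by (simp add: k0_def kk0)
  show "subst3 (comp3 g F) (phi, psi, fps_X) = 0"
    using g by (simp add: subst3_comp3[OF zcF zc0] appF_gamma0 subst3_arc_comp[OF zc0 k00])
qed

end

definition om :: "nat \<Rightarrow> complex" where "om m = cis (2 * pi / real m)"

lemma om_pow: "om m ^ n = cis (2 * pi * real n / real m)"
  by (simp add: om_def DeMoivre field_simps)

lemma om_pow_m: "m > 0 \<Longrightarrow> om m ^ m = 1"
  by (simp add: om_pow)

lemma om_pow_eq1: assumes "m > 0" "om m ^ n = 1" shows "m dvd n"
proof -
  have "cos (2 * pi * real n / real m) = 1"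
    using assms(2) unfolding om_pow by (metis Re_complex_of_real cis.sel(1) one_complex.sel(1))
  then obtain j :: int where j: "2 * pi * real n / real m = j * 2 * pi" by (auto simp: cos_one_2pi_int)
  then have "real n = real m * j" using assms(1) by (simp add: field_simps)
  then have "int n = int m * j" by (metis of_int_eq_iff of_int_mult of_int_of_nat_eq)
  then have "int m dvd int n" by simp
  then show ?thesis by simp
qed

lemma exists_root: assumes "m > 0" shows "\<exists>y::complex. y^m = x"
proof (cases "x = 0")
  case True then show ?thesis using assms by (intro exI[of _ 0]) simp
next
  case False
  let ?y = "complex_of_real (root m (cmod x)) * cis (Arg x / real m)"
  have "?y ^ m = complex_of_real (root m (cmod x)) ^ m * cis (Arg x / real m) ^ m"
    by (simp only: power_mult_distrib)
  also have "\<dots> = complex_of_real (root m (cmod x) ^ m) * cis (Arg x)"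
    using assms by (simp add: DeMoivre flip: of_real_power)
  also have "\<dots> = complex_of_real (cmod x) * sgn x"
    using assms False by (simp add: cis_Arg)
  also have "\<dots> = x" by (simp add: sgn_eq)
  finally show ?thesis by blast
qed

definition is_hom :: "('a::comm_ring_1 \<Rightarrow> 'a) \<Rightarrow> bool" where
  "is_hom \<theta> = ((\<forall>x y. \<theta> (x + y) = \<theta> x + \<theta> y) \<and> (\<forall>x y. \<theta> (x * y) = \<theta> x * \<theta> y) \<and> \<theta> 1 = 1)"

lemma hom_0: "is_hom \<theta> \<Longrightarrow> \<theta> 0 = 0"
  unfolding is_hom_def by (metis add_cancel_right_right add_0)
lemma hom_uminus: "is_hom \<theta> \<Longrightarrow> \<theta> (- x) = - \<theta> x"
  using hom_0[of \<theta>] unfolding is_hom_def by (metis add.right_inverse add_eq_0_iff)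
lemma hom_sum: "is_hom \<theta> \<Longrightarrow> \<theta> (sum f S) = (\<Sum>s\<in>S. \<theta> (f s))"
  by (induct S rule: infinite_finite_induct) (auto simp: hom_0 is_hom_def)

lemma map_poly_mult_hom:
  assumes "is_hom \<theta>"
  shows "map_poly \<theta> (p * q) = map_poly \<theta> p * map_poly \<theta> q"
proof (rule poly_eqI)
  fix n
  have z: "\<theta> 0 = 0" by (rule hom_0[OF assms])
  show "coeff (map_poly \<theta> (p * q)) n = coeff (map_poly \<theta> p * map_poly \<theta> q) n"
    using assms by (simp add: coeff_map_poly z coeff_mult hom_sum is_hom_def)
qed

lemma map_poly_prod_lin:
  assumes "is_hom \<theta>"
  shows "map_poly \<theta> (\<Prod>j\<in>S. [:- e j, 1:]) = (\<Prod>j\<in>S. [:- \<theta> (e j), 1:])"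
proof (induct S rule: infinite_finite_induct)
  case (infinite A) then show ?case using assms by (simp add: is_hom_def)
next
  case empty then show ?case using assms by (simp add: is_hom_def)
next
  case (insert x F)
  have "map_poly \<theta> [:- e x, 1:] = [:- \<theta> (e x), 1:]"
    using assms hom_0[OF assms] hom_uminus[OF assms] by (simp add: map_poly_pCons is_hom_def)
  then show ?case using insert
    by (simp only: prod.insert[OF insert(1,2)] map_poly_mult_hom[OF assms])
qed

lemma poly_as_sum:
  fixes q :: "'a::comm_semiring_1 poly"
  assumes "degree q \<le> N"
  shows "poly q x = (\<Sum>i\<le>N. coeff q i * x^i)"
  unfolding poly_altdef
proof (rule sum.mono_neutral_left)
  show "\<forall>i\<in>{..N} - {..degree q}. coeff q i * x ^ i = 0" by (auto simp: coeff_eq_0)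
qed (use assms in auto)

lemma compose_hom: "k $ 0 = 0 \<Longrightarrow> is_hom (\<lambda>f::complex fps. f oo k)"
  by (simp add: is_hom_def fps_compose_add_distrib fps_compose_mult_distrib)

lemma rot_coeff_zero:
  assumes "m > 0" "h oo (fps_const (om m) * fps_X) = h" "\<not> m dvd n"
  shows "h $ n = 0"
proof -
  have "om m ^ n * h $ n = h $ n" using assms(2) fps_nth_compose_linear[of h "om m" n] by simp
  moreover have "om m ^ n \<noteq> 1" using om_pow_eq1[OF assms(1)] assms(3) by blast
  ultimately show ?thesis by (metis mult_cancel_right2)
qed

definition dsc :: "nat \<Rightarrow> complex fps \<Rightarrow> complex fps" where
  "dsc m h = Abs_fps (\<lambda>n. h $ (n * m))"

lemma dsc_compose:
  assumes "m > 0" "\<And>n. \<not> m dvd n \<Longrightarrow> h $ n = 0"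
  shows "dsc m h oo fps_X^m = h"
proof (rule fps_ext)
  fix n
  have "(dsc m h oo fps_X^m) $ n = (\<Sum>l\<in>{0..n}. if n = m * l then h $ (l * m) else 0)"
    unfolding fps_compose_nth by (intro sum.cong refl) (simp add: dsc_def power_mult[symmetric])
  also have "\<dots> = h $ n"
  proof (cases "m dvd n")
    case True
    then obtain l where l: "n = m * l" by blast
    have "l \<le> n" using assms(1) l by simp
    have "(\<Sum>l'\<in>{0..n}. if n = m * l' then h $ (l' * m) else 0) = (\<Sum>l'\<in>{0..n}. if l' = l then h $ (l' * m) else 0)"
      using assms(1) l by (intro sum.cong refl) auto
    also have "\<dots> = h $ n" using \<open>l \<le> n\<close> l by (simp add: mult.commute)
    finally show ?thesis .
  next
    case False
    then show ?thesis using assms(2)[OF False] by (auto intro!: sum.neutral)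
  qed
  finally show "(dsc m h oo fps_X^m) $ n = h $ n" .
qed

definition lz :: "complex fps \<Rightarrow> ser3" where
  "lz H = Abs_fps (\<lambda>k. fps_const (fps_const (H $ k)))"

lemma sum_if_and: "(\<Sum>j\<le>(n::nat). if P \<and> j = 0 then S else 0) = (if P then S else (0::'a::comm_monoid_add))"
  by (induct n) auto
lemma sum_if_0: "(\<Sum>j\<le>(n::nat). if j = 0 then S else 0) = (S::'a::comm_monoid_add)"
  by (induct n) auto

lemma coeff3_lz: "coeff3 (lz H) i j k = (if i = 0 \<and> j = 0 then H $ k else 0)"
  by (simp add: coeff3_def lz_def)

lemma subst3_lz: "subst3 (lz H) (\<alpha>, \<beta>, \<delta>) = H oo \<delta>"
proof (rule fps_ext)
  fix n
  have "subst3 (lz H) (\<alpha>, \<beta>, \<delta>) $ n = (\<Sum>i\<le>n. \<Sum>j\<le>n. \<Sum>k\<le>n. (if i = 0 \<and> j = 0 then H $ k * (\<delta>^k) $ n else 0))"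
    unfolding subst3_def prod.case fps_nth_Abs_fps coeff3_lz
    by (intro sum.cong refl) auto
  also have "\<dots> = (\<Sum>k\<le>n. H $ k * (\<delta>^k) $ n)"
  proof -
    have e: "(\<Sum>k\<le>n. if i = 0 \<and> j = 0 then H $ k * (\<delta>^k) $ n else 0) =
        (if i = 0 \<and> j = 0 then (\<Sum>k\<le>n. H $ k * (\<delta>^k) $ n) else 0)" for i j
      by (cases "i = 0 \<and> j = 0") auto
    show ?thesis by (simp only: e sum_if_and sum_if_0)
  qed
  also have "\<dots> = (H oo \<delta>) $ n" by (simp add: fps_compose_nth atLeast0AtMost)
  finally show "subst3 (lz H) (\<alpha>, \<beta>, \<delta>) $ n = (H oo \<delta>) $ n" .
qed


lemma lin_compose: "(fps_const u * fps_X) oo k = fps_const u * (k :: complex fps)" if "k$0 = 0"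
  using that by (simp add: fps_compose_mult_distrib)

lemma prod_shift_cyclic:
  assumes "f m = f 0" "m > 0"
  shows "(\<Prod>j<m. f (Suc j)) = (\<Prod>j<m. (f j :: 'a::comm_monoid_mult))"
proof -
  obtain m' where m: "m = Suc m'" using assms(2) by (cases m) auto
  have "(\<Prod>j<m. f j) = f 0 * (\<Prod>j<m'. f (Suc j))" unfolding m by (rule prod.lessThan_Suc_shift)
  moreover have "(\<Prod>j<m. f (Suc j)) = (\<Prod>j<m'. f (Suc j)) * f (Suc m')" unfolding m by simp
  ultimately show ?thesis using assms(1) m by (simp add: mult.commute)
qed

lemma elim_core:
  fixes V :: ser3 and sel :: "arc \<Rightarrow> complex fps"
  assumes m: "m > 0"
    and Vs: "\<And>\<alpha> \<beta> \<delta>. zc (\<alpha>,\<beta>,\<delta>) \<Longrightarrow> subst3 V (\<alpha>,\<beta>,\<delta>) = sel (\<alpha>,\<beta>,\<delta>)"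
    and zg: "zc (a,b,fps_X^m)" and zg': "zc (A,B,k^m)" and k0: "k$0 = 0"
    and inv: "\<And>g. subst3 g (a,b,fps_X^m) = 0 \<Longrightarrow> subst3 g (A,B,k^m) = 0"
  shows "\<exists>j. sel (A,B,k^m) = sel (a,b,fps_X^m) oo (fps_const (om m ^ j) * k)"
proof -
  define e where "e = sel (a,b,fps_X^m)"
  define E where "E = sel (A,B,k^m)"
  define \<omega> where "\<omega> = om m"
  define es where "es j = e oo (fps_const (\<omega>^j) * fps_X)" for j
  define p where "p = (\<Prod>j<m. [:- es j, 1:])"
  define \<theta>r where "\<theta>r f = f oo (fps_const \<omega> * fps_X)" for f
  have hr: "is_hom \<theta>r" unfolding \<theta>r_def by (rule compose_hom) simp
  have es_rot: "\<theta>r (es j) = es (Suc j)" for j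
  proof -
    have "\<theta>r (es j) = e oo ((fps_const (\<omega>^j) * fps_X) oo (fps_const \<omega> * fps_X))"
      unfolding \<theta>r_def es_def by (rule fps_compose_assoc[symmetric]) simp_all
    also have "(fps_const (\<omega>^j) * fps_X) oo (fps_const \<omega> * fps_X) = fps_const (\<omega>^Suc j) * fps_X"
      by (subst lin_compose) (simp, simp only: mult.assoc[symmetric] fps_const_mult power_Suc2)
    finally show ?thesis by (simp only: es_def)
  qed
  have "map_poly \<theta>r p = (\<Prod>j<m. [:- es (Suc j), 1:])"
    unfolding p_def map_poly_prod_lin[OF hr] es_rot ..
  also have "\<dots> = p"
    unfolding p_def by (rule prod_shift_cyclic[OF _ m]) (simp add: es_def \<omega>_def om_pow_m[OF m])
  finally have mp: "map_poly \<theta>r p = p" .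
  define H where "H i = dsc m (coeff p i)" for i
  have H: "H i oo fps_X^m = coeff p i" for i
  proof -
    have "coeff p i oo (fps_const \<omega> * fps_X) = coeff p i"
      using arg_cong[OF mp, of "\<lambda>q. coeff q i"] hom_0[OF hr]
      by (simp add: coeff_map_poly \<theta>r_def)
    then show ?thesis unfolding H_def
      by (intro dsc_compose[OF m] rot_coeff_zero[OF m]) (auto simp: \<omega>_def)
  qed
  define N where "N = degree p"
  define G where "G = (\<Sum>i\<le>N. V^i * lz (H i))"
  have sG: "subst3 G (\<alpha>,\<beta>,\<delta>) = (\<Sum>i\<le>N. sel (\<alpha>,\<beta>,\<delta>)^i * (H i oo \<delta>))" if "zc (\<alpha>,\<beta>,\<delta>)" for \<alpha> \<beta> \<delta>
    by (simp add: G_def subst3_sum subst3_mult[OF that] subst3_power[OF that] Vs[OF that] subst3_lz)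
  have "subst3 G (a,b,fps_X^m) = (\<Sum>i\<le>N. coeff p i * e^i)"
    by (simp add: sG[OF zg] H e_def mult.commute)
  also have "\<dots> = poly p e" unfolding N_def by (rule poly_altdef[symmetric])
  also have "\<dots> = (\<Prod>j<m. e - es j)" by (simp add: p_def poly_prod)
  also have "\<dots> = 0"
  proof -
    have "e - es 0 = 0" by (simp add: es_def)
    then show ?thesis using m by (intro prod_zero) auto
  qed
  finally have "subst3 G (A,B,k^m) = 0" by (rule inv)
  moreover have "H i oo k^m = coeff p i oo k" for i
  proof -
    have "H i oo k^m = H i oo (fps_X^m oo k)" by (simp add: fps_X_power_compose[OF k0])
    also have "\<dots> = (H i oo fps_X^m) oo k" by (rule fps_compose_assoc[OF k0]) (use m in simp)
    finally show ?thesis by (simp add: H)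
  qed
  ultimately have "(\<Sum>i\<le>N. coeff (map_poly (\<lambda>f. f oo k) p) i * E^i) = 0"
    using hom_0[OF compose_hom[OF k0]]
    by (simp add: sG[OF zg'] E_def coeff_map_poly mult.commute)
  moreover have "poly (map_poly (\<lambda>f. f oo k) p) E = (\<Sum>i\<le>N. coeff (map_poly (\<lambda>f. f oo k) p) i * E^i)"
    by (rule poly_as_sum) (simp add: N_def map_poly_degree_leq)
  ultimately have "poly (map_poly (\<lambda>f. f oo k) p) E = 0" by simp
  then have "(\<Prod>j<m. E - (es j oo k)) = 0"
    by (simp add: p_def map_poly_prod_lin[OF compose_hom[OF k0]] poly_prod)
  then obtain j where "E - (es j oo k) = 0" by auto
  then have "E = e oo (fps_const (\<omega>^j) * k)"
    by (simp add: es_def fps_compose_assoc[symmetric, OF k0] lin_compose[OF k0])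
  then show ?thesis unfolding E_def e_def \<omega>_def by blast
qed


lemma binom1: "\<exists>h. (1 + \<delta>)^m = 1 + of_nat m * \<delta> + \<delta>^2 * (h :: complex fps)"
proof (induct m)
  case 0 then show ?case by (intro exI[of _ 0]) simp
next
  case (Suc m)
  then obtain h where h: "(1 + \<delta>)^m = 1 + of_nat m * \<delta> + \<delta>^2 * h" by blast
  have "(1 + \<delta>)^Suc m = 1 + of_nat (Suc m) * \<delta> + \<delta>^2 * (of_nat m + h + \<delta> * h)"
    by (simp add: h algebra_simps power2_eq_square)
  then show ?case by blast
qed

lemma rad_near1:
  fixes w :: "complex fps"
  assumes m: "m > 0" and w0: "w $ 0 = 1" and wN: "ordge (w - 1) N"
  defines "\<rho> \<equiv> fps_radical (\<lambda>_ _. 1) m w"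
  shows "\<rho>^m = w" "\<rho> $ 0 = 1" "ordge (\<rho> - 1) N"
proof -
  obtain m' where m': "m = Suc m'" using m by (cases m) auto
  show pw: "\<rho>^m = w"
    unfolding \<rho>_def m' using power_radical[of w "\<lambda>_ _. 1" m'] w0 by simp
  show r0: "\<rho> $ 0 = 1" using m by (simp add: \<rho>_def)
  define \<delta> where "\<delta> = \<rho> - 1"
  have "\<delta> $ l = 0" if "l < N" for l
    using that
  proof (induct l rule: less_induct)
    case (less l)
    show ?case
    proof (cases "l = 0")
      case True then show ?thesis using r0 by (simp add: \<delta>_def)
    next
      case False
      have od: "ordge \<delta> l" using less by (simp add: ordge_def)
      obtain h where h: "(1 + \<delta>)^m = 1 + of_nat m * \<delta> + \<delta>^2 * h" using binom1 by blast
      have "ordge (\<delta>^2 * h) (2*l)" using ordge_mult[OF ordge_power[OF od, of 2] ordge_0(2)[of h]] by simp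
      then have "(\<delta>^2 * h) $ l = 0" using False by (simp add: ordge_def)
      moreover have "w $ l = 0" using wN less(2) False by (simp add: ordge_def)
      moreover have "(1 + \<delta>) = \<rho>" by (simp add: \<delta>_def)
      ultimately have "of_nat m * \<delta> $ l = 0" using h pw False
        by (metis add.right_neutral add_0 fps_add_nth fps_one_nth fps_mult_left_const_nth
            fps_of_nat)
      then show ?thesis using m by simp
    qed
  qed
  then show "ordge (\<rho> - 1) N" by (simp add: ordge_def \<delta>_def)
qed

lemma reparam:
  fixes c :: "complex fps"
  assumes c0: "c $ 0 = 0" and cnz: "c \<noteq> 0"
  shows "\<exists>\<sigma> \<tau>. \<sigma> $ 0 = 0 \<and> \<tau> $ 0 = 0 \<and> \<sigma> oo \<tau> = fps_X \<and> c oo \<sigma> = fps_X ^ subdegree c \<and> subdegree c > 0"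
proof -
  define m where "m = subdegree c"
  have m: "m > 0" using c0 cnz unfolding m_def by (metis gr0I subdegree_eq_0_iff)
  define e where "e = fps_shift m c"
  have ce: "c = fps_X^m * e" using fps_shift_times_fps_X_power[of m c] by (simp add: e_def m_def mult.commute)
  have e0: "e $ 0 \<noteq> 0" using cnz by (simp add: e_def m_def)
  obtain y where y: "y^m = e $ 0" using exists_root[OF m] by blast
  obtain m' where m': "m = Suc m'" using m by (cases m) auto
  define \<rho> where "\<rho> = fps_radical (\<lambda>_ _. y) m e"
  have pr: "\<rho>^m = e" unfolding \<rho>_def m' using power_radical[of e "\<lambda>_ _. y" m'] e0 y m' by simp
  have r0: "\<rho> $ 0 = y" using m by (simp add: \<rho>_def)
  have y0: "y \<noteq> 0" using y e0 m by (auto simp: power_0_left)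
  define \<tau> where "\<tau> = fps_X * \<rho>"
  have t0: "\<tau> $ 0 = 0" and t1: "\<tau> $ 1 \<noteq> 0" using r0 y0 by (simp_all add: \<tau>_def)
  have tc: "\<tau>^m = c" by (simp add: \<tau>_def power_mult_distrib pr ce)
  define \<sigma> where "\<sigma> = fps_inv \<tau>"
  have s0: "\<sigma> $ 0 = 0" by (simp add: \<sigma>_def fps_inv_def)
  have st: "\<sigma> oo \<tau> = fps_X" unfolding \<sigma>_def by (rule fps_inv[OF t0 t1])
  have ts: "\<tau> oo \<sigma> = fps_X" unfolding \<sigma>_def by (rule fps_inv_right[OF t0 t1])
  have "c oo \<sigma> = fps_X^m" by (simp add: tc[symmetric] fps_compose_power[OF s0, symmetric] ts)
  then show ?thesis using s0 t0 st m unfolding m_def by blast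
qed

lemma compose_inj0:
  assumes "\<sigma> $ 0 = 0" "\<tau> $ 0 = 0" "\<sigma> oo \<tau> = fps_X" "(h :: complex fps) oo \<sigma> = 0"
  shows "h = 0"
proof -
  have "h = h oo (\<sigma> oo \<tau>)" using assms(3) by simp
  also have "\<dots> = (h oo \<sigma>) oo \<tau>" by (rule fps_compose_assoc[OF assms(2,1)])
  finally show ?thesis using assms(4) by simp
qed

lemma curve_ideal_arc_comp:
  assumes "zc \<gamma>" "\<sigma> $ 0 = 0" "\<tau> $ 0 = 0" "\<sigma> oo \<tau> = fps_X"
  shows "curve_ideal (arc_comp \<gamma> \<sigma>) = curve_ideal \<gamma>"
  unfolding curve_ideal_def subst3_arc_comp[OF assms(1,2)]
  using compose_inj0[OF assms(2,3,4)] by auto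

lemma curve_ideal_Xpow:
  assumes "zc \<gamma>" "m > 0"
  shows "curve_ideal (arc_comp \<gamma> (fps_X^m)) = curve_ideal \<gamma>"
proof -
  have "(h :: complex fps) oo fps_X^m = 0 \<longleftrightarrow> h = 0" for h
    using assms(2) by (subst fps_compose_eq_0_iff) auto
  then show ?thesis
    unfolding curve_ideal_def using assms(2)
    by (auto simp: subst3_arc_comp[OF assms(1)])
qed

lemma val_lemma:
  fixes u :: "complex fps"
  assumes nu: "\<nu> \<noteq> 0" and z: "\<zeta>^M = 1" and M: "M \<ge> 1"
    and od: "ordge u d"
    and W: "ordge ((u oo (fps_const \<zeta> * fps_X)) - u - fps_const \<nu> * fps_X^M * u) (M + d + 1)"
  shows "u $ d = 0"
proof (rule ccontr)
  assume nz: "u $ d \<noteq> 0"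
  have Wn: "\<zeta>^l * u$l - u$l - \<nu> * (if l < M then 0 else u $ (l - M)) = 0" if "l < M + d + 1" for l
    using W that by (simp add: ordge_def fps_X_power_mult_nth mult.assoc)
  have "(if d < M then 0 else u $ (d - M)) = 0" using od M by (auto simp: ordge_def)
  then have "(\<zeta>^d - 1) * u $ d = 0" using Wn[of d] by (simp add: algebra_simps)
  then have zd: "\<zeta>^d = 1" using nz by simp
  have "\<zeta>^(d + M) = 1" using zd z by (simp add: power_add)
  then have "\<nu> * u $ d = 0" using Wn[of "d + M"] by simp
  then show False using nu nz by simp
qed

lemma ordge_compose_two:
  assumes "ordge f n" "ordge (k1 - k2) (c+2)" "k1$0 = 0" "k2$0 = 0"
  shows "ordge ((f oo k1) - (f oo k2)) (n + c + 1)"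
  unfolding ordge_def
proof (intro allI impI)
  fix l assume l: "l < n + c + 1"
  have z: "f $ m * (k1^m - k2^m) $ l = 0" for m
  proof (cases "m < n")
    case True then show ?thesis using assms(1) by (simp add: ordge_def)
  next
    case False
    have "ordge (k1^m - k2^m) (c + 2 + m - 1)"
      by (rule ordge_power_diff[OF assms(2)]) (use assms(3,4) in \<open>auto simp: ordge_def\<close>)
    moreover have "l < c + 2 + m - 1" using False l by linarith
    ultimately show ?thesis by (simp add: ordge_def)
  qed
  show "((f oo k1) - (f oo k2)) $ l = 0" unfolding compose_diff_nth by (rule sum.neutral) (use z in auto)
qed


context spk
begin

lemma est:
  fixes f e E k K K' :: "complex fps" and G :: ser3
  assumes m: "m > 0" and G: "in_max_pow G 2"
    and h1: "(e oo (fps_const \<zeta> * k)) = e + (fps_X^m)^c * (fps_const \<nu> * e + Gg)"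
    and h2: "(f oo K) = E + (fps_X^m)^c * (fps_const \<nu> * E + Gg1)"
    and h3: "E = (f oo fps_X^m)"
    and hK: "K' = k^m" "ordge (K' - K) (m*c + d + 1)" "K $ 0 = 0"
    and hk: "ordge (k - fps_X) (m*c+2)" "k $ 0 = 0" "\<zeta>^m = 1"
    and hG: "ordge (Gg - Gg1) (d+1)"
    and hu: "ordge (e - E) d"
  shows "ordge (((e - E) oo (fps_const \<zeta> * fps_X)) - (e - E) - fps_const \<nu> * fps_X^(m*c) * (e - E)) (m*c + d + 1)"
proof -
  define u where "u = e - E"
  define zk where "zk = fps_const \<zeta> * k"
  have zk0: "zk $ 0 = 0" using hk by (simp add: zk_def)
  have K'0: "K' $ 0 = 0" using hK hk m by (simp add: fps_nth_power_0)
  have Xm: "(fps_X^m)^c = (fps_X^(m*c) :: complex fps)" by (simp add: power_mult)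
  have "(fps_X^m oo zk) = zk^m" by (rule fps_X_power_compose[OF zk0])
  also have "\<dots> = K'" using hk hK by (simp add: zk_def power_mult_distrib fps_const_power)
  finally have Xzk: "(fps_X^m oo zk) = K'" .
  have Ezk: "(E oo zk) = (f oo K')"
  proof -
    have "(E oo zk) = (f oo (fps_X^m oo zk))" unfolding h3
      by (rule fps_compose_assoc[symmetric, OF zk0]) (use m in simp)
    then show ?thesis using Xzk by simp
  qed
  define D2 where "D2 = (f oo K') - (f oo K)"
  have oD2: "ordge D2 (m*c + d + 1)"
    unfolding D2_def by (rule ordge_compose_close[OF hK(2) K'0 hK(3)]) simp
  have eq: "(u oo zk) - u - fps_const \<nu> * fps_X^(m*c) * u = fps_X^(m*c) * (Gg - Gg1) - D2"
  proof -
    have "(u oo zk) = (e oo zk) - (E oo zk)" by (simp add: u_def fps_compose_sub_distrib)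
    also have "\<dots> = e + fps_X^(m*c) * (fps_const \<nu> * e + Gg) - (E + fps_X^(m*c) * (fps_const \<nu> * E + Gg1) + D2)"
      using h1 h2 Ezk unfolding zk_def D2_def Xm by (simp add: algebra_simps)
    finally show ?thesis by (simp add: u_def algebra_simps)
  qed
  have o1: "ordge ((u oo zk) - u - fps_const \<nu> * fps_X^(m*c) * u) (m*c + d + 1)"
    unfolding eq
  proof (rule ordge_diff[OF _ oD2])
    show "ordge (fps_X^(m*c) * (Gg - Gg1)) (m*c + d + 1)"
      using ordge_Xpow_mult[OF hG, of "m*c"] by (simp add: ac_simps)
  qed
  have o2: "ordge ((u oo (fps_const \<zeta> * fps_X)) - (u oo zk)) (d + m*c + 1)"
  proof (rule ordge_compose_two)
    show "ordge u d" using hu by (simp add: u_def)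
    have "fps_const \<zeta> * fps_X - zk = - (fps_const \<zeta> * (k - fps_X))" by (simp add: zk_def algebra_simps)
    then show "ordge (fps_const \<zeta> * fps_X - zk) (m * c + 2)"
      using ordge_uminus[OF ordge_const_mult[OF hk(1)]] by simp
  qed (use zk0 in simp_all)
  have eqW: "((u oo (fps_const \<zeta> * fps_X)) - u - fps_const \<nu> * fps_X^(m*c) * u) =
      ((u oo (fps_const \<zeta> * fps_X)) - (u oo zk)) + ((u oo zk) - u - fps_const \<nu> * fps_X^(m*c) * u)"
    by simp
  have "ordge (((u oo (fps_const \<zeta> * fps_X)) - (u oo zk)) + ((u oo zk) - u - fps_const \<nu> * fps_X^(m*c) * u)) (m*c + d + 1)"
    using o1 o2 by (intro ordge_add) (simp_all add: ac_simps)
  then have "ordge ((u oo (fps_const \<zeta> * fps_X)) - u - fps_const \<nu> * fps_X^(m*c) * u) (m*c + d + 1)"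
    unfolding eqW .
  then show ?thesis unfolding u_def .
qed

lemma ordge_subdeg: "ordge f d" if "f = 0 \<or> d \<le> subdegree f" for f :: "complex fps"
  unfolding ordge_def
proof (intro allI impI)
  fix l assume "l < d"
  show "f $ l = 0"
  proof (cases "f = 0")
    case False
    then have "l < subdegree f" using that \<open>l < d\<close> by simp
    then show ?thesis by (rule nth_less_subdegree_zero)
  qed simp
qed

lemma uniq_core:
  assumes m: "m > 0" and zg: "zc (a,b,fps_X^m)"
    and inv: "\<And>g. subst3 g (a,b,fps_X^m) = 0 \<Longrightarrow> subst3 g (appF F (a,b,fps_X^m)) = 0"
  shows "a = (phi oo fps_X^m) \<and> b = (psi oo fps_X^m)"
proof -
  define Rg where "Rg = subst3 R (a,b,fps_X^m)"
  define A1 where "A1 = a + (fps_X^m)^c * (fps_const lam * a + subst3 P (a,b,fps_X^m))"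
  define B1 where "B1 = b + (fps_X^m)^c * (fps_const mu * b + subst3 Q (a,b,fps_X^m))"
  have aF: "appF F (a,b,fps_X^m) = (A1, B1, fps_X^m + (fps_X^m)^(c+1) * Rg)"
    unfolding A1_def B1_def Rg_def by (rule appF_simp[OF zg])
  have mc: "m * c \<ge> 1" using m c1 by simp
  have Rg0: "ordge Rg 1" using subst3_nth0[OF R1] by (simp add: Rg_def ordge_def)
  define w where "w = 1 + fps_X^(m*c) * Rg"
  have ow: "ordge (w - 1) (m*c + 1)" using ordge_Xpow_mult[OF Rg0, of "m*c"] by (simp add: w_def add.commute)
  have w0: "w $ 0 = 1" using ow mc by (simp add: w_def ordge_def)
  define \<rho> where "\<rho> = fps_radical (\<lambda>_ _. 1) m w"
  have r1: "\<rho>^m = w" and r2: "\<rho> $ 0 = 1" and r3: "ordge (\<rho> - 1) (m*c + 1)"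
    using rad_near1[OF m w0 ow] unfolding \<rho>_def by auto
  define k where "k = fps_X * \<rho>"
  have k0: "k $ 0 = 0" by (simp add: k_def)
  have km: "k^m = fps_X^m + (fps_X^m)^(c+1) * Rg"
  proof -
    have "k^m = fps_X^m * w" by (simp add: k_def power_mult_distrib r1)
    also have "\<dots> = fps_X^m + (fps_X^m * fps_X^(m*c)) * Rg" by (simp add: w_def distrib_left mult.assoc)
    also have "fps_X^m * fps_X^(m*c) = (fps_X^m)^(c+1)" by (simp add: power_mult[symmetric] power_add[symmetric] algebra_simps)
    finally show ?thesis .
  qed
  have kX: "ordge (k - fps_X) (m*c + 2)"
  proof -
    have "k - fps_X = fps_X * (\<rho> - 1)" by (simp add: k_def algebra_simps)
    moreover have "ordge (fps_X * (\<rho> - 1)) (1 + (m*c + 1))" by (rule ordge_mult[OF ordge_X r3])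
    ultimately show ?thesis by simp
  qed
  have aF': "appF F (a,b,fps_X^m) = (A1, B1, k^m)" using aF km by simp
  have zA: "zc (A1, B1, k^m)" using zc_appF[OF zcF zg] aF' by simp
  have inv': "\<And>g. subst3 g (a,b,fps_X^m) = 0 \<Longrightarrow> subst3 g (A1,B1,k^m) = 0" using inv aF' by simp
  have "\<exists>j. fst (A1,B1,k^m) = (fst (a,b,(fps_X::complex fps)^m) oo (fps_const (om m ^ j) * k))"
    by (rule elim_core[where V=X3 and sel=fst, OF m _ zg zA k0]) (simp_all add: subst3_X3 inv')
  then obtain j1 where j1: "A1 = (a oo (fps_const (om m ^ j1) * k))" by (simp only: fst_conv) blast
  have "\<exists>j. (\<lambda>x. fst (snd x)) (A1,B1,k^m) = ((\<lambda>x. fst (snd x)) (a,b,(fps_X::complex fps)^m) oo (fps_const (om m ^ j) * k))"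
    by (rule elim_core[where V=Y3 and sel="\<lambda>x. fst (snd x)", OF m _ zg zA k0]) (simp_all add: subst3_Y3 inv')
  then obtain j2 where j2: "B1 = (b oo (fps_const (om m ^ j2) * k))" by (simp only: fst_conv snd_conv) blast
  have zj: "(om m ^ j)^m = 1" for j
  proof -
    have "(om m ^ j)^m = (om m ^ m)^j" by (simp only: power_mult[symmetric] mult.commute)
    then show ?thesis using om_pow_m[OF m] by simp
  qed
  have z1: "(om m ^ j1)^m = 1" and z2: "(om m ^ j2)^m = 1" by (rule zj)+
  define \<Phi> where "\<Phi> = (phi oo fps_X^m)"
  define \<Psi> where "\<Psi> = (psi oo fps_X^m)"
  have Xm0: "(fps_X^m :: complex fps) $ 0 = 0" using m by simp
  have g1: "arc_comp (phi, psi, fps_X) (fps_X^m) = (\<Phi>, \<Psi>, fps_X^m)"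
    using Xm0 by (simp add: arc_comp_def \<Phi>_def \<Psi>_def)
  have zg1: "zc (\<Phi>, \<Psi>, fps_X^m)" using zc0 m by (simp add: \<Phi>_def \<Psi>_def)
  have sg1: "(subst3 g (phi, psi, fps_X) oo fps_X^m) = subst3 g (\<Phi>, \<Psi>, fps_X^m)" for g
    using subst3_arc_comp[OF zc0 Xm0, of g] g1 by simp
  define K where "K = (k0 oo fps_X^m)"
  have K0: "K $ 0 = 0" using Xm0 by (simp add: K_def k0_def kk0)
  have KR: "K = fps_X^m + (fps_X^m)^(c+1) * subst3 R (\<Phi>, \<Psi>, fps_X^m)"
    by (simp add: K_def k0_def kk_def fps_compose_add_distrib fps_compose_mult_distrib[OF Xm0]
        fps_compose_power[OF Xm0, symmetric] fps_X_fps_compose_startby0[OF Xm0] sg1)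
  have graph_eq: "(f oo K) = (f oo fps_X^m) + (fps_X^m)^c * (fps_const \<nu> * (f oo fps_X^m) + subst3 G (\<Phi>, \<Psi>, fps_X^m))"
    if "(f oo k0) = f + fps_X^c * (fps_const \<nu> * f + subst3 G (phi, psi, fps_X))" for f \<nu> G
  proof -
    have "(f oo K) = ((f oo k0) oo fps_X^m)" unfolding K_def
      by (rule fps_compose_assoc[OF Xm0]) (simp add: k0_def kk0)
    also have "\<dots> = ((f + fps_X^c * (fps_const \<nu> * f + subst3 G (phi, psi, fps_X))) oo fps_X^m)"
      using that by simp
    also have "\<dots> = (f oo fps_X^m) + (fps_X^m)^c * (fps_const \<nu> * (f oo fps_X^m) + subst3 G (\<Phi>, \<Psi>, fps_X^m))"
      by (simp add: fps_compose_add_distrib fps_compose_mult_distrib[OF Xm0]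
        fps_compose_power[OF Xm0, symmetric] fps_X_fps_compose_startby0[OF Xm0] sg1)
    finally show ?thesis .
  qed
  have gP: "(phi oo K) = \<Phi> + (fps_X^m)^c * (fps_const lam * \<Phi> + subst3 P (\<Phi>, \<Psi>, fps_X^m))"
    using graph_eq[OF fix_eq[OF lam0 P2 fix_phi]] by (simp add: \<Phi>_def)
  have gQ: "(psi oo K) = \<Psi> + (fps_X^m)^c * (fps_const mu * \<Psi> + subst3 Q (\<Phi>, \<Psi>, fps_X^m))"
    using graph_eq[OF fix_eq[OF mu0 Q2 fix_psi]] by (simp add: \<Psi>_def)
  define u where "u = a - \<Phi>"
  define v where "v = b - \<Psi>"
  have u0: "u $ 0 = 0" and v0: "v $ 0 = 0" using zg zg1 by (simp_all add: u_def v_def)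
  have "u = 0 \<and> v = 0"
  proof (rule ccontr)
    assume nz: "\<not> (u = 0 \<and> v = 0)"
    define d where "d = (if u = 0 then subdegree v else if v = 0 then subdegree u else min (subdegree u) (subdegree v))"
    have ou: "ordge u d" by (rule ordge_subdeg) (auto simp: d_def)
    have ov: "ordge v d" by (rule ordge_subdeg) (auto simp: d_def)
    have nzd: "u $ d \<noteq> 0 \<or> v $ d \<noteq> 0" using nz by (auto simp: d_def min_def)
    have d1: "1 \<le> d" using nzd u0 v0 by (cases d) auto
    have oP: "ordge (subst3 P (a,b,fps_X^m) - subst3 P (\<Phi>, \<Psi>, fps_X^m)) (d + 2 - 1)"
      by (rule subst3_lip[OF P2 _ d1 zg zg1]) (use ou ov in \<open>simp_all add: u_def v_def\<close>)
    have oQ: "ordge (subst3 Q (a,b,fps_X^m) - subst3 Q (\<Phi>, \<Psi>, fps_X^m)) (d + 2 - 1)"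
      by (rule subst3_lip[OF Q2 _ d1 zg zg1]) (use ou ov in \<open>simp_all add: u_def v_def\<close>)
    have oR: "ordge (Rg - subst3 R (\<Phi>, \<Psi>, fps_X^m)) (d + 1 - 1)"
      unfolding Rg_def by (rule subst3_lip[OF R1 _ d1 zg zg1]) (use ou ov in \<open>simp_all add: u_def v_def\<close>)
    have oK: "ordge (k^m - K) (m*c + d + 1)"
    proof -
      have "k^m - K = fps_X^(m*(c+1)) * (Rg - subst3 R (\<Phi>, \<Psi>, fps_X^m))"
      proof -
        have XX: "(fps_X^m)^(c+1) = (fps_X^(m*(c+1)) :: complex fps)" by (simp only: power_mult)
        show ?thesis by (simp only: km KR XX) (simp add: algebra_simps)
      qed
      moreover have "ordge (fps_X^(m*(c+1)) * (Rg - subst3 R (\<Phi>, \<Psi>, fps_X^m))) (d + m*(c+1))"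
        using ordge_Xpow_mult[of _ d "m*(c+1)"] oR by simp
      ultimately show ?thesis by (rule_tac ordge_mono) (use m in auto)
    qed
    have Wu: "ordge ((u oo (fps_const (om m ^ j1) * fps_X)) - u - fps_const lam * fps_X^(m*c) * u) (m*c + d + 1)"
      unfolding u_def
      by (rule est[OF m P2 _ gP \<Phi>_def refl oK K0 kX k0 z1])
         (use j1 A1_def oP ou in \<open>simp_all add: u_def\<close>)
    have Wv: "ordge ((v oo (fps_const (om m ^ j2) * fps_X)) - v - fps_const mu * fps_X^(m*c) * v) (m*c + d + 1)"
      unfolding v_def
      by (rule est[OF m Q2 _ gQ \<Psi>_def refl oK K0 kX k0 z2])
         (use j2 B1_def oQ ov in \<open>simp_all add: v_def\<close>)
    have "u $ d = 0"
      by (rule val_lemma[OF lam0 _ mc ou Wu]) (use z1 in \<open>simp add: power_mult\<close>)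
    moreover have "v $ d = 0"
      by (rule val_lemma[OF mu0 _ mc ov Wv]) (use z2 in \<open>simp add: power_mult\<close>)
    ultimately show False using nzd by simp
  qed
  then show ?thesis by (simp add: u_def v_def \<Phi>_def \<Psi>_def)
qed

end

context spk
begin

lemma unique_curve:
  assumes fc: "formal_curve C" and ic: "invariant_curve F C" and ne: "\<not> contained_in_E C"
  shows "C = curve_ideal (phi, psi, fps_X)"
proof -
  obtain \<gamma> where arc: "is_arc \<gamma>" and C: "C = curve_ideal \<gamma>" using fc unfolding formal_curve_def by auto
  obtain a b cz where g: "\<gamma> = (a,b,cz)" by (cases \<gamma>)
  have zg: "zc (a,b,cz)" using arc g by (simp add: is_arc_def)
  have "subst3 Z3 (a,b,cz) \<noteq> 0" using ne C g by (simp add: contained_in_E_def curve_ideal_def)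
  then have cnz: "cz \<noteq> 0" using subst3_Z3[OF zg] by simp
  have cz0: "cz $ 0 = 0" using zg by simp
  obtain \<sigma> \<tau> where s0: "\<sigma> $ 0 = 0" and t0: "\<tau> $ 0 = 0" and st: "\<sigma> oo \<tau> = fps_X"
      and cs: "cz oo \<sigma> = fps_X ^ subdegree cz" and m: "subdegree cz > 0"
    using reparam[OF cz0 cnz] by blast
  define m where "m = subdegree cz"
  have g': "arc_comp (a,b,cz) \<sigma> = ((a oo \<sigma>), (b oo \<sigma>), fps_X^m)"
    using cs by (simp add: arc_comp_def m_def)
  have CI: "curve_ideal ((a oo \<sigma>), (b oo \<sigma>), fps_X^m) = C"
    using curve_ideal_arc_comp[OF zg s0 t0 st] g' C g by simp
  have zg': "zc ((a oo \<sigma>), (b oo \<sigma>), fps_X^m)" using zc_arc_comp[OF zg, of \<sigma>] g' by simp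
  have inv: "subst3 g' (appF F ((a oo \<sigma>), (b oo \<sigma>), fps_X^m)) = 0"
    if "subst3 g' ((a oo \<sigma>), (b oo \<sigma>), fps_X^m) = 0" for g'
  proof -
    have "g' \<in> C" using that CI by (auto simp: curve_ideal_def)
    then have "comp3 g' F \<in> C" using ic by (simp add: invariant_curve_def)
    then have "subst3 (comp3 g' F) ((a oo \<sigma>), (b oo \<sigma>), fps_X^m) = 0" using CI by (auto simp: curve_ideal_def)
    then show ?thesis by (simp add: subst3_comp3[OF zcF zg'])
  qed
  have "(a oo \<sigma>) = (phi oo fps_X^m) \<and> (b oo \<sigma>) = (psi oo fps_X^m)"
    by (rule uniq_core[OF _ zg' inv]) (use m in \<open>simp_all add: m_def\<close>)
  moreover have "(fps_X::complex fps)^m $ 0 = 0" using m by (simp add: m_def)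
  ultimately have "((a oo \<sigma>), (b oo \<sigma>), fps_X^m) = arc_comp (phi, psi, fps_X) (fps_X^m)"
    by (simp add: arc_comp_def)
  then have "C = curve_ideal (arc_comp (phi, psi, fps_X) (fps_X^m))" using CI by simp
  also have "\<dots> = curve_ideal (phi, psi, fps_X)" by (rule curve_ideal_Xpow[OF zc0]) (use m in \<open>simp add: m_def\<close>)
  finally show ?thesis .
qed

lemma C0_props:
  "formal_curve (curve_ideal (phi, psi, fps_X))"
  "invariant_curve F (curve_ideal (phi, psi, fps_X))"
  "\<not> contained_in_E (curve_ideal (phi, psi, fps_X))"
  "smooth_curve (curve_ideal (phi, psi, fps_X))"
  "transverse_E (curve_ideal (phi, psi, fps_X))"
proof -
  have arc: "is_arc (phi, psi, fps_X)" using zc0 by (simp add: is_arc_def)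
  show "formal_curve (curve_ideal (phi, psi, fps_X))" using arc by (auto simp: formal_curve_def)
  show "invariant_curve F (curve_ideal (phi, psi, fps_X))" by (rule gamma0_invariant)
  show "\<not> contained_in_E (curve_ideal (phi, psi, fps_X))"
    using subst3_Z3[OF zc0] by (simp add: contained_in_E_def curve_ideal_def)
  show "smooth_curve (curve_ideal (phi, psi, fps_X))" unfolding smooth_curve_def
    by (rule exI[of _ phi], rule exI[of _ psi], rule exI[of _ fps_X]) (use arc in simp)
  show "transverse_E (curve_ideal (phi, psi, fps_X))" unfolding transverse_E_def
    by (rule exI[of _ phi], rule exI[of _ psi], rule exI[of _ fps_X]) (use arc in simp)
qed

end

theorem proposition5p1:
  fixes c :: nat and lam mu :: complex and P Q R :: ser3
  assumes "c \<ge> 1"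
    and "lam \<noteq> 0"
    and "\<exists>r::real. r < 0 \<and> mu = of_real r * lam"
    and "in_max_pow P 2" and "in_max_pow Q 2" and "in_max_pow R 1"
  shows "(\<exists>!C. formal_curve C \<and> invariant_curve (spike c lam mu P Q R) C \<and> \<not> contained_in_E C)
    \<and> (\<forall>C. formal_curve C \<and> invariant_curve (spike c lam mu P Q R) C \<and> \<not> contained_in_E C
           \<longrightarrow> smooth_curve C \<and> transverse_E C)"
proof -
  have mu0: "mu \<noteq> 0" using assms(2,3) by auto
  interpret spk c lam mu P Q R
    by unfold_locales (use assms mu0 in auto)
  have FF: "spike c lam mu P Q R = F" by (simp add: F_def)
  show ?thesis
    unfolding FF
    using C0_props unique_curve by metis
qed


end
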